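(* For every $\theta\in\mathbb R$, $E[(\hat\theta_n-\theta)^2]<\infty$ for all sufficiently large $n$, and \[\lim_{n\to\infty}n\,E\!\left[(\hat\theta_n-\theta)^2\right]=\frac{m+1}{m(2m-1)}.\]
   Context: Fix $m>1/2$. Let $c_m:=\left(\int_{\mathbb R}(1+x^2)^{-m}\,dx\right)^{-1}$ and $f(x):=c_m(1+x^2)^{-m}$. For $\theta\in\mathbb R$, $\mathrm{PVII}_m(\theta,1)$ denotes the Pearson Type VII distribution with location $\theta$ and scale $1$, i.e. the law with density $x\mapsto f(x-\theta)$. Let $(X_n)_{n\ge1}$ be i.i.d. random variables on a probability space $(\Omega,\mathcal F,P)$ with law $\mathrm{PVII}_m(\theta,1)$. For each $n$, let $\hat\theta_n(x_1,\dots,x_n)$ be any Borel measurable function on $\mathbb R^n$ such that $\hat\theta_n(x_1,\dots,x_n)$ is a maximizer of $t\mapsto\prod_{i=1}^n f(x_i-t)$ over $t\in\mathbb R$, and let $\hat\theta_n:=\hat\theta_n(X_1,\dots,X_n)$ (the maximum likelihood estimator). *)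

theory Defs
  imports "HOL-Probability.Probability"
begin

definition pvii_const :: "real \<Rightarrow> real" where
  "pvii_const m = 1 / (\<integral>x. (1 + x\<^sup>2) powr (- m) \<partial>lborel)"

definition pvii_density :: "real \<Rightarrow> real \<Rightarrow> real" where
  "pvii_density m x = pvii_const m * (1 + x\<^sup>2) powr (- m)"

end

theory Submission
  imports Defs
begin

definition psi :: "real \<Rightarrow> real" where "psi u = u / (1 + u\<^sup>2)"
definition dpsi :: "real \<Rightarrow> real" where "dpsi u = (1 - u\<^sup>2) / (1 + u\<^sup>2)\<^sup>2"

lemma psi_bound: "\<bar>psi u\<bar> \<le> 1/2"
proof -
  have "0 \<le> (\<bar>u\<bar> - 1)\<^sup>2" by simp
  then have "2 * \<bar>u\<bar> \<le> 1 + u\<^sup>2" by (simp add: power2_eq_square algebra_simps abs_mult_self_eq)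
  moreover have p: "1 + u\<^sup>2 > 0" by (simp add: add_pos_nonneg)
  moreover have "\<bar>psi u\<bar> = \<bar>u\<bar> / (1 + u\<^sup>2)" unfolding psi_def using p by (simp add: abs_divide)
  ultimately show ?thesis by (simp add: pos_divide_le_eq)
qed

lemma psi_lip: "\<bar>psi a - psi b\<bar> \<le> \<bar>a - b\<bar>"
proof -
  have pa: "1 + a\<^sup>2 > 0" "1 + b\<^sup>2 > 0" by (auto intro: add_pos_nonneg)
  have eq: "psi a - psi b = (a - b) * (1 - a*b) / ((1 + a\<^sup>2) * (1 + b\<^sup>2))"
    unfolding psi_def using pa(1)[THEN less_imp_neq, symmetric] pa(2)[THEN less_imp_neq, symmetric]
    apply (simp add: divide_simps)
    apply (simp add: power2_eq_square algebra_simps)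
    done
  have "\<bar>1 - a*b\<bar> \<le> (1 + a\<^sup>2) * (1 + b\<^sup>2)"
  proof -
    have "\<bar>1 - a*b\<bar> \<le> 1 + \<bar>a*b\<bar>" by linarith
    also have "\<bar>a*b\<bar> \<le> a\<^sup>2 + b\<^sup>2 + a\<^sup>2*b\<^sup>2"
    proof -
      have "0 \<le> (\<bar>a\<bar> - \<bar>b\<bar>)\<^sup>2" by simp
      then have "2 * \<bar>a*b\<bar> \<le> a\<^sup>2 + b\<^sup>2"
        by (simp add: power2_eq_square algebra_simps abs_mult abs_mult_self_eq)
      moreover have "0 \<le> a\<^sup>2*b\<^sup>2" by simp
      ultimately show ?thesis by linarith
    qed
    finally show ?thesis by (simp add: algebra_simps power2_eq_square)
  qed
  moreover have pp: "(1 + a\<^sup>2) * (1 + b\<^sup>2) > 0" using pa by simp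
  ultimately have q: "\<bar>1 - a*b\<bar> / ((1 + a\<^sup>2) * (1 + b\<^sup>2)) \<le> 1"
    by (simp add: pos_divide_le_eq)
  have "\<bar>psi a - psi b\<bar> = \<bar>a - b\<bar> * (\<bar>1 - a*b\<bar> / ((1 + a\<^sup>2) * (1 + b\<^sup>2)))"
    unfolding eq using pp by (simp add: abs_mult abs_divide)
  also have "\<dots> \<le> \<bar>a - b\<bar> * 1" using q by (intro mult_left_mono) auto
  finally show ?thesis by simp
qed

lemma dpsi_bound: "\<bar>dpsi u\<bar> \<le> 1"
proof -
  have p0: "1 + u\<^sup>2 > 0" by (simp add: add_pos_nonneg)
  then have p: "(1 + u\<^sup>2)\<^sup>2 > 0" by simp
  have z: "0 \<le> u\<^sup>2" by simp
  have "\<bar>1 - u\<^sup>2\<bar> \<le> 1 + u\<^sup>2" using z by linarith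
  also have "\<dots> \<le> (1 + u\<^sup>2) * (1 + u\<^sup>2)" using mult_left_mono[of 1 "1+u\<^sup>2" "1+u\<^sup>2"] z by (simp add: add_pos_nonneg)
  finally have "\<bar>1 - u\<^sup>2\<bar> \<le> (1 + u\<^sup>2)\<^sup>2" by (simp add: power2_eq_square)
  moreover have "\<bar>dpsi u\<bar> = \<bar>1 - u\<^sup>2\<bar> / (1 + u\<^sup>2)\<^sup>2" unfolding dpsi_def using p by (simp add: abs_divide)
  ultimately show ?thesis using p by (simp add: pos_divide_le_eq)
qed

lemma psi_diff_expand:
  assumes "\<bar>t\<bar> \<le> 1"
  shows "\<exists>r. psi a - psi (a - t) = t * (dpsi a + r) \<and> \<bar>r\<bar> \<le> 5 * \<bar>t\<bar>"
proof -
  have pa: "1 + a\<^sup>2 > 0" "1 + (a-t)\<^sup>2 > 0" by (auto intro: add_pos_nonneg)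
  define N where "N = 3*a - a^3 - t + t*a\<^sup>2"
  define D where "D = (1 + a\<^sup>2)\<^sup>2 * (1 + (a-t)\<^sup>2)"
  define r where "r = t * N / D"
  have eq: "psi a - psi (a - t) = t * (dpsi a + r)"
    unfolding psi_def dpsi_def r_def N_def D_def using pa(1)[THEN less_imp_neq, symmetric] pa(2)[THEN less_imp_neq, symmetric]
    apply (simp add: divide_simps)
    apply (simp add: power2_eq_square power3_eq_cube algebra_simps)
    done
  have D: "D > 0" unfolding D_def using pa by simp
  have num: "\<bar>N\<bar> \<le> 5 * (1 + a\<^sup>2)\<^sup>2"
  proof -
    have "\<bar>N\<bar> \<le> 3*\<bar>a\<bar> + \<bar>a\<bar>^3 + 1 + a\<^sup>2"
    proof -
      have "\<bar>t*a\<^sup>2\<bar> \<le> a\<^sup>2" using assms by (simp add: abs_mult mult_left_le_one_le)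
      moreover have "\<bar>a^3\<bar> = \<bar>a\<bar>^3" by (simp add: power_abs)
      ultimately show ?thesis using assms unfolding N_def by linarith
    qed
    also have "\<dots> \<le> 5 * (1 + a\<^sup>2)\<^sup>2"
    proof -
      have "0 \<le> (\<bar>a\<bar> - 1)\<^sup>2" by simp
      then have h1: "\<bar>a\<bar> \<le> 1 + a\<^sup>2" by (simp add: power2_eq_square algebra_simps abs_mult_self_eq)
      have h2: "\<bar>a\<bar>^3 \<le> (1 + a\<^sup>2)\<^sup>2"
      proof -
        have "\<bar>a\<bar>^3 = \<bar>a\<bar> * a\<^sup>2" by (simp add: power3_eq_cube power2_eq_square abs_mult_self_eq)
        also have "\<dots> \<le> (1 + a\<^sup>2) * (1 + a\<^sup>2)" using h1 by (intro mult_mono) auto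
        finally show ?thesis by (simp add: power2_eq_square)
      qed
      have h3: "1 + a\<^sup>2 \<le> (1 + a\<^sup>2)\<^sup>2"
      proof -
        have "(1 + a\<^sup>2) * 1 \<le> (1 + a\<^sup>2) * (1 + a\<^sup>2)" by (intro mult_left_mono) auto
        then show ?thesis by (simp add: power2_eq_square)
      qed
      show ?thesis using h1 h2 h3 by linarith
    qed
    finally show ?thesis .
  qed
  have "(1 + a\<^sup>2)\<^sup>2 * 1 \<le> D" unfolding D_def by (intro mult_left_mono) auto
  then have "\<bar>N\<bar> \<le> 5 * D" using num by linarith
  then have ND: "\<bar>N\<bar> / D \<le> 5" using D by (simp add: divide_le_eq)
  have "\<bar>r\<bar> = \<bar>t\<bar> * (\<bar>N\<bar> / D)"
    unfolding r_def using D by (simp add: abs_mult abs_divide)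
  also have "\<dots> \<le> \<bar>t\<bar> * 5" using ND by (intro mult_left_mono) auto
  finally show ?thesis using eq by (intro exI[of _ r]) auto
qed

lemma one_plus_sq_pos [simp]: "0 < 1 + (x::real)\<^sup>2"
  by (simp add: add_pos_nonneg)
lemma one_plus_sq_neq0 [simp]: "1 + (x::real)\<^sup>2 \<noteq> 0"
  by (smt (verit) zero_le_power2)

lemma powr_tail_nn:
  assumes p: "p > 1/2"
  shows "(\<integral>\<^sup>+y. ennreal (indicator {1..} y * y powr (-2*p)) \<partial>lborel) = ennreal (1 / (2*p - 1))"
proof -
  have "((\<lambda>x. x powr (-2*p)) has_integral -(1 powr (-2*p+1)) / (-2*p+1)) {1..}"
    using p by (intro has_integral_powr_to_inf) auto
  moreover have "-(1 powr (-2*p+1)) / (-2*p+1) = 1 / (2*p - 1)" using p by (simp add: field_simps)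
  ultimately have "((\<lambda>x. x powr (-2*p)) has_integral 1 / (2*p - 1)) {1..}" by simp
  then show ?thesis
    by (subst nn_integral_has_integral_lebesgue) auto
qed

lemma integrable_powr_neg:
  assumes p: "p > 1/2"
  shows "integrable lborel (\<lambda>y::real. (1 + y\<^sup>2) powr (-p))"
proof (rule integrableI_nonneg)
  show "(\<lambda>y::real. (1 + y\<^sup>2) powr (-p)) \<in> borel_measurable lborel" by measurable
  show "AE x in lborel. 0 \<le> (1 + x\<^sup>2) powr - p" by simp
  define g where "g y = indicator {-1..1} y + indicator {1..} y * y powr (-2*p) + indicator {1..} (-y) * (-y) powr (-2*p)" for y :: real
  have le: "(1 + y\<^sup>2) powr (-p) \<le> g y" for y
  proof (cases "\<bar>y\<bar> \<le> 1")
    case True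
    have "(1 + y\<^sup>2) powr (-p) \<le> 1"
      using powr_mono[of "-p" 0 "1+y\<^sup>2"] p by (simp add: add_nonneg_eq_0_iff)
    moreover have "1 \<le> g y" using True unfolding g_def
      by (auto simp: indicator_def)
    ultimately show ?thesis by linarith
  next
    case False
    have "(1 + y\<^sup>2) powr (-p) \<le> (\<bar>y\<bar>\<^sup>2) powr (-p)"
      using False p by (intro powr_mono2') auto
    also have "(\<bar>y\<bar>\<^sup>2) powr (-p) = \<bar>y\<bar> powr (-2*p)"
    proof -
      have "\<bar>y\<bar> powr (-2*p) = (\<bar>y\<bar> powr 2) powr (-p)" by (subst powr_powr) simp
      also have "\<bar>y\<bar> powr 2 = \<bar>y\<bar>\<^sup>2" by simp
      finally show ?thesis by simp
    qed
    also have "\<dots> \<le> g y" using False unfolding g_def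
      by (cases "y \<ge> 0") (auto simp: indicator_def)
    finally show ?thesis .
  qed
  have gnn: "0 \<le> g y" for y unfolding g_def by (auto simp: indicator_def)
  have "(\<integral>\<^sup>+y. ennreal ((1 + y\<^sup>2) powr (-p)) \<partial>lborel) \<le> (\<integral>\<^sup>+y. ennreal (g y) \<partial>lborel)"
    using le by (intro nn_integral_mono ennreal_leI) auto
  also have "\<dots> = (\<integral>\<^sup>+y. ennreal (indicator {-1..1::real} y) \<partial>lborel)
      + (\<integral>\<^sup>+y. ennreal (indicator {1..} y * y powr (-2*p)) \<partial>lborel)
      + (\<integral>\<^sup>+y. ennreal (indicator {1..} (-y) * (-y) powr (-2*p)) \<partial>lborel)"
  proof -
    have "(\<integral>\<^sup>+y. ennreal (g y) \<partial>lborel) = (\<integral>\<^sup>+y. (ennreal (indicator {-1..1::real} y)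
       + ennreal (indicator {1..} y * y powr (-2*p))) + ennreal (indicator {1..} (-y) * (-y) powr (-2*p)) \<partial>lborel)"
      unfolding g_def by (intro nn_integral_cong) (simp add: ennreal_plus)
    also have "\<dots> = (\<integral>\<^sup>+y. (ennreal (indicator {-1..1::real} y)
       + ennreal (indicator {1..} y * y powr (-2*p))) \<partial>lborel) + (\<integral>\<^sup>+y. ennreal (indicator {1..} (-y) * (-y) powr (-2*p)) \<partial>lborel)"
      by (rule nn_integral_add) measurable
    also have "(\<integral>\<^sup>+y. (ennreal (indicator {-1..1::real} y)
       + ennreal (indicator {1..} y * y powr (-2*p))) \<partial>lborel) = (\<integral>\<^sup>+y. ennreal (indicator {-1..1::real} y) \<partial>lborel)
      + (\<integral>\<^sup>+y. ennreal (indicator {1..} y * y powr (-2*p)) \<partial>lborel)"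
      by (intro nn_integral_add) auto
    finally show ?thesis .
  qed
  also have "(\<integral>\<^sup>+y. ennreal (indicator {1..} (-y) * (-y) powr (-2*p)) \<partial>lborel)
      = (\<integral>\<^sup>+y. ennreal (indicator {1..} y * y powr (-2*p)) \<partial>lborel)"
    using nn_integral_real_affine[of "\<lambda>y. ennreal (indicator {1..} y * y powr (-2*p))" "-1" 0]
    by simp
  also have "(\<integral>\<^sup>+y. ennreal (indicator {-1..1::real} y) \<partial>lborel) = 2"
    by (simp add: ennreal_indicator)
  finally have "(\<integral>\<^sup>+y. ennreal ((1 + y\<^sup>2) powr (-p)) \<partial>lborel) \<le> 2 + ennreal (1 / (2*p - 1)) + ennreal (1 / (2*p - 1))"
    using powr_tail_nn[OF p] by simp
  also have "\<dots> < \<infinity>" by (simp add: ennreal_plus[symmetric] del: ennreal_plus)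
  finally show "(\<integral>\<^sup>+y. ennreal ((1 + y\<^sup>2) powr (-p)) \<partial>lborel) < \<infinity>" .
qed

lemma tendsto_F0:
  fixes p :: real
  assumes p: "p > 1/2" and lim: "filterlim (\<lambda>y::real. 1 + y\<^sup>2) at_top F"
  shows "((\<lambda>y::real. y * (1 + y\<^sup>2) powr (-p)) \<longlongrightarrow> 0) F"
proof (rule Lim_null_comparison)
  show "((\<lambda>y. (1 + y\<^sup>2) powr (1/2 - p)) \<longlongrightarrow> 0) F"
    using p lim by (intro tendsto_neg_powr) auto
  show "\<forall>\<^sub>F y in F. norm (y * (1 + y\<^sup>2) powr (-p)) \<le> (1 + y\<^sup>2) powr (1/2 - p)"
  proof (intro always_eventually allI)
    fix y :: real
    have pos: "1 + y\<^sup>2 > 0" by (simp add: add_pos_nonneg)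
    have "\<bar>y\<bar> = sqrt (y\<^sup>2)" by simp
    also have "\<dots> \<le> sqrt (1 + y\<^sup>2)" by (rule real_sqrt_le_mono) simp
    also have "\<dots> = (1 + y\<^sup>2) powr (1/2)" using pos by (simp add: powr_half_sqrt)
    finally have "\<bar>y\<bar> \<le> (1 + y\<^sup>2) powr (1/2)" .
    then have "\<bar>y\<bar> * (1 + y\<^sup>2) powr (-p) \<le> (1 + y\<^sup>2) powr (1/2) * (1 + y\<^sup>2) powr (-p)"
      by (intro mult_right_mono) auto
    also have "\<dots> = (1 + y\<^sup>2) powr (1/2 - p)" by (simp add: powr_add[symmetric])
    finally show "norm (y * (1 + y\<^sup>2) powr (-p)) \<le> (1 + y\<^sup>2) powr (1/2 - p)"
      by (simp add: abs_mult)
  qed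
qed

lemma filterlim_1_plus_sq_top: "filterlim (\<lambda>y::real. 1 + y\<^sup>2) at_top at_top"
  by (intro filterlim_tendsto_add_at_top[OF tendsto_const] filterlim_pow_at_top filterlim_ident) auto

lemma filterlim_1_plus_sq_bot: "filterlim (\<lambda>y::real. 1 + y\<^sup>2) at_top at_bot"
proof -
  have "filterlim (\<lambda>y::real. 1 + (-y)\<^sup>2) at_top at_bot"
    using filterlim_1_plus_sq_top unfolding filterlim_at_bot_mirror by simp
  then show ?thesis by simp
qed

lemma powr_recurrence:
  fixes p :: real
  assumes p: "p > 1/2"
  shows "(\<integral>y. (1 + y\<^sup>2) powr (-(p+1)) \<partial>lborel) = (2*p - 1) / (2*p) * (\<integral>y. (1 + y\<^sup>2) powr (-p) \<partial>lborel)"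
proof -
  define F where "F y = y * (1 + y\<^sup>2) powr (-p)" for y :: real
  define f where "f y = (1 - 2*p) * (1 + y\<^sup>2) powr (-p) + 2*p * (1 + y\<^sup>2) powr (-(p+1))" for y :: real
  have i1: "integrable lborel (\<lambda>y::real. (1 + y\<^sup>2) powr (-p))" using integrable_powr_neg[OF p] .
  have i2: "integrable lborel (\<lambda>y::real. (1 + y\<^sup>2) powr (-(p+1)))" using integrable_powr_neg[of "p+1"] p by simp
  have intf: "integrable lborel f" unfolding f_def using i1 i2 by auto
  have deriv: "(F has_real_derivative f y) (at y)" for y
  proof -
    have pos: "1 + y\<^sup>2 > 0" by (simp add: add_pos_nonneg)
    have "(F has_real_derivative 1 * (1 + y\<^sup>2) powr (-p) + y * ((-p) * (1 + y\<^sup>2) powr (-p - 1) * (2 * y))) (at y)"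
      unfolding F_def using pos
      by (intro derivative_eq_intros DERIV_fun_powr) (auto simp: power2_eq_square)
    moreover have "1 * (1 + y\<^sup>2) powr (-p) + y * ((-p) * (1 + y\<^sup>2) powr (-p - 1) * (2 * y)) = f y"
    proof -
      have e: "(1 + y\<^sup>2) powr (-p) = (1 + y\<^sup>2) * (1 + y\<^sup>2) powr (-p - 1)"
      proof -
        have "(1 + y\<^sup>2) * (1 + y\<^sup>2) powr (-p - 1) = (1 + y\<^sup>2) powr 1 * (1 + y\<^sup>2) powr (-p - 1)"
          using pos by (simp add: powr_one less_imp_le)
        also have "\<dots> = (1 + y\<^sup>2) powr (1 + (-p - 1))" by (rule powr_add[symmetric])
        finally show ?thesis by simp
      qed
      have e2: "(1 + y\<^sup>2) powr (-(p+1)) = (1 + y\<^sup>2) powr (-p - 1)" by (rule arg_cong[where f="\<lambda>e. (1 + y\<^sup>2) powr e"]) simp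
      show ?thesis unfolding f_def e2 e by (simp add: algebra_simps power2_eq_square)
    qed
    ultimately show ?thesis by simp
  qed
  have "(LBINT x=-\<infinity>..\<infinity>. f x) = 0 - 0"
  proof (rule interval_integral_FTC_integrable)
    show "- \<infinity> < (\<infinity>::ereal)" by simp
    show "(F has_vector_derivative f x) (at x)" for x
      using deriv[of x] by (simp add: has_real_derivative_iff_has_vector_derivative)
    show "isCont f x" for x unfolding f_def
      by (intro continuous_intros) (auto simp: add_pos_nonneg)
    show "set_integrable lborel (einterval (- \<infinity>) \<infinity>) f"
      using intf by (simp add: set_integrable_def)
    show "((F \<circ> real_of_ereal) \<longlongrightarrow> 0) (at_right (- \<infinity>))"
      unfolding ereal_tendsto_simps F_def using tendsto_F0[OF p filterlim_1_plus_sq_bot] by simp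
    show "((F \<circ> real_of_ereal) \<longlongrightarrow> 0) (at_left \<infinity>)"
      unfolding ereal_tendsto_simps F_def using tendsto_F0[OF p filterlim_1_plus_sq_top] by simp
  qed
  then have "(\<integral>y. f y \<partial>lborel) = 0"
    by (simp add: interval_lebesgue_integral_def set_lebesgue_integral_def)
  moreover have "(\<integral>y. f y \<partial>lborel) = (1 - 2*p) * (\<integral>y. (1 + y\<^sup>2) powr (-p) \<partial>lborel)
      + 2*p * (\<integral>y. (1 + y\<^sup>2) powr (-(p+1)) \<partial>lborel)"
    unfolding f_def using i1 i2 by simp
  ultimately show ?thesis using p by (simp add: field_simps)
qed

definition fc :: "real \<Rightarrow> real \<Rightarrow> real" where "fc m y = (1 + y\<^sup>2) powr (-m)"

lemma fc_pos: "fc m y > 0" by (simp add: fc_def)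
lemma fc_even: "fc m (-y) = fc m y" by (simp add: fc_def)
lemma fc_le1: "m \<ge> 0 \<Longrightarrow> fc m y \<le> 1"
  unfolding fc_def using powr_mono[of "-m" 0 "1+y\<^sup>2"] by simp
lemma fc_int: "m > 1/2 \<Longrightarrow> integrable lborel (fc m)"
  unfolding fc_def using integrable_powr_neg by blast
lemma fc_meas [measurable]: "fc m \<in> borel_measurable borel"
  unfolding fc_def by measurable
lemma psi_meas [measurable]: "psi \<in> borel_measurable borel"
  unfolding psi_def by measurable
lemma dpsi_meas [measurable]: "dpsi \<in> borel_measurable borel"
  unfolding dpsi_def by measurable
lemma psi_odd: "psi (-u) = - psi u" by (simp add: psi_def)

lemma integrable_bounded_mult:
  fixes g h :: "real \<Rightarrow> real"
  assumes "integrable lborel g" "h \<in> borel_measurable borel" "\<And>x. \<bar>h x\<bar> \<le> B"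
  shows "integrable lborel (\<lambda>x. g x * h x)"
proof -
  have hb: "\<And>x. \<bar>h x\<bar> \<le> \<bar>B\<bar>" using assms(3) by (meson abs_ge_self order_trans)
  have "integrable lborel (\<lambda>x. h x * g x)"
    using assms by (intro Bochner_Integration.integrable_bound[OF integrable_mult_right[of B, OF integrable_abs[OF assms(1)]]]) 
      (auto simp: abs_mult intro!: AE_I2 mult_right_mono hb)
  then show ?thesis by (simp add: mult.commute)
qed

lemma fc_shift_int: "m > 1/2 \<Longrightarrow> integrable lborel (\<lambda>v. fc m (t + v))"
  using lborel_integrable_real_affine[OF fc_int, of m 1 t] by simp

lemma fc_psi_int: "m > 1/2 \<Longrightarrow> integrable lborel (\<lambda>y. fc m y * psi (y - t))"
proof (rule integrable_bounded_mult[OF fc_int])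
  show "\<bar>psi (x - t)\<bar> \<le> 1/2" for x by (rule psi_bound)
qed auto

lemma phi_sym: "(\<integral>y. fc m y * psi (y - t) \<partial>lborel) = (\<integral>v. fc m (t + v) * psi v \<partial>lborel)"
  using lborel_integral_real_affine[of 1 "\<lambda>y. fc m y * psi (y - t)" t] by simp

lemma phi_refl: "(\<integral>y. fc m y * psi (y - t) \<partial>lborel) = - (\<integral>v. fc m (v - t) * psi v \<partial>lborel)"
proof -
  have "(\<integral>y. fc m y * psi (y - t) \<partial>lborel) = (\<integral>v. fc m (t + (-1) * v) * psi (-1 * v) \<partial>lborel)"
    using phi_sym[of m t] lborel_integral_real_affine[of "-1" "\<lambda>v. fc m (t + v) * psi v" 0] by simp
  also have "\<dots> = (\<integral>v. - (fc m (v - t) * psi v) \<partial>lborel)"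
  proof (rule Bochner_Integration.integral_cong)
    fix v :: real
    have "fc m (t + (-1) * v) = fc m (v - t)" unfolding fc_def by (simp add: power2_commute)
    then show "fc m (t + (-1) * v) * psi (-1 * v) = - (fc m (v - t) * psi v)" by (simp add: psi_odd)
  qed simp
  finally show ?thesis by simp
qed

lemma phi_neg: "(\<integral>y. fc m y * psi (y - (-t)) \<partial>lborel) = - (\<integral>y. fc m y * psi (y - t) \<partial>lborel)"
proof -
  have "(\<integral>y. fc m y * psi (y - (-t)) \<partial>lborel) = (\<integral>y. fc m (0 + (-1) * y) * psi (0 + (-1) * y - (-t)) \<partial>lborel)"
    using lborel_integral_real_affine[of "-1" "\<lambda>y. fc m y * psi (y - (-t))" 0] by simp
  also have "\<dots> = (\<integral>y. - (fc m y * psi (y - t)) \<partial>lborel)"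
  proof (rule Bochner_Integration.integral_cong)
    fix y :: real
    have "psi (0 + (-1) * y - (-t)) = - psi (y - t)" using psi_odd[of "y - t"] by simp
    then show "fc m (0 + (-1) * y) * psi (0 + (-1) * y - (-t)) = - (fc m y * psi (y - t))"
      by (simp add: fc_even)
  qed simp
  finally show ?thesis by simp
qed

lemma psi_pos: "u > 0 \<Longrightarrow> psi u > 0" by (simp add: psi_def)
lemma psi_nonneg: "u \<ge> 0 \<Longrightarrow> psi u \<ge> 0" by (simp add: psi_def)

lemma powr_diff_lower:
  fixes m A B :: real
  assumes m: "m > 0" and A: "A > 0" and AB: "A \<le> B"
  shows "A powr (-m) - B powr (-m) \<ge> m * B powr (-m-1) * (B - A)"
proof -
  define x where "x = B / A"
  have B: "B > 0" using A AB by simp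
  have x1: "x \<ge> 1" unfolding x_def using A AB by simp
  have "ln x \<ge> 1 - 1/x"
    using ln_le_minus_one[of "1/x"] x1 by (simp add: ln_div)
  have "x powr m = exp (m * ln x)" using x1 by (simp add: powr_def)
  also have "\<dots> \<ge> 1 + m * ln x" by (rule exp_ge_add_one_self)
  finally have xm: "x powr m \<ge> 1 + m * (1 - 1/x)"
    using \<open>ln x \<ge> 1 - 1/x\<close> m by (smt (verit) mult_left_mono)
  have "A powr (-m) = B powr (-m) * x powr m"
    unfolding x_def using A B by (simp add: powr_divide powr_minus field_simps)
  then have "A powr (-m) - B powr (-m) = B powr (-m) * (x powr m - 1)" by (simp add: algebra_simps)
  also have "\<dots> \<ge> B powr (-m) * (m * (1 - 1/x))"
    using xm by (intro mult_left_mono) auto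
  finally have "A powr (-m) - B powr (-m) \<ge> B powr (-m) * (m * (1 - 1/x))" .
  moreover have "B powr (-m) * (m * (1 - 1/x)) = m * B powr (-m-1) * (B - A)"
  proof -
    have "1 - 1/x = (B - A) / B" unfolding x_def using A B by (simp add: field_simps)
    moreover have "B powr (-m-1) = B powr (-m) / B" using B by (simp add: powr_diff)
    ultimately show ?thesis by simp
  qed
  ultimately show ?thesis by simp
qed

lemma fc_mono: "m \<ge> 0 \<Longrightarrow> b\<^sup>2 \<le> a\<^sup>2 \<Longrightarrow> fc m a \<le> fc m b"
  unfolding fc_def by (rule powr_mono2') auto

lemma psi_ge_25: "1 \<le> v \<Longrightarrow> v \<le> 2 \<Longrightarrow> psi v \<ge> 2/5"
proof -
  assume v: "1 \<le> v" "v \<le> 2"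
  have "(2 * v - 1) * (v - 2) \<le> 0" using v by (intro mult_nonneg_nonpos) auto
  then have "2 * (1 + v\<^sup>2) \<le> 5 * v" by (simp add: algebra_simps power2_eq_square)
  then show ?thesis unfolding psi_def by (simp add: le_divide_eq)
qed

lemma phi_bound:
  fixes m \<delta> K t :: real
  assumes m: "m > 1/2" and d: "\<delta> > 0" and t: "\<delta> \<le> t" "t \<le> K"
  shows "(\<integral>y. fc m y * psi (y - t) \<partial>lborel) \<le> - (4/5 * m * \<delta> * (1 + (2+K)\<^sup>2) powr (-m-1))"
proof -
  define Bm where "Bm = (1 + (2+K)\<^sup>2) powr (-m-1)"
  define \<alpha> where "\<alpha> = 2/5 * (m * Bm * (4 * \<delta>))"
  define G where "G v = psi v * (fc m (t + v) - fc m (v - t))" for v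
  have i1: "integrable lborel (\<lambda>v. fc m (t + v) * psi v)"
  proof (rule integrable_bounded_mult[OF fc_shift_int[OF m]])
    show "\<bar>psi x\<bar> \<le> 1/2" for x by (rule psi_bound)
  qed auto
  have i2: "integrable lborel (\<lambda>v. fc m (v - t) * psi v)"
  proof (rule integrable_bounded_mult)
    show "integrable lborel (\<lambda>v. fc m (v - t))" using fc_shift_int[OF m, of "-t"] by simp
    show "\<bar>psi x\<bar> \<le> 1/2" for x by (rule psi_bound)
  qed auto
  have two: "2 * (\<integral>y. fc m y * psi (y - t) \<partial>lborel) = (\<integral>v. G v \<partial>lborel)"
  proof -
    have "(\<integral>v. G v \<partial>lborel) = (\<integral>v. fc m (t + v) * psi v - fc m (v - t) * psi v \<partial>lborel)"
      unfolding G_def by (simp add: algebra_simps)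
    also have "\<dots> = (\<integral>v. fc m (t + v) * psi v \<partial>lborel) - (\<integral>v. fc m (v - t) * psi v \<partial>lborel)"
      using i1 i2 by (rule Bochner_Integration.integral_diff)
    also have "\<dots> = 2 * (\<integral>y. fc m y * psi (y - t) \<partial>lborel)"
      using phi_sym[of m t] phi_refl[of m t] by simp
    finally show ?thesis by simp
  qed
  have Bm_pos: "Bm > 0" unfolding Bm_def by simp
  have Gle: "G v \<le> - \<alpha> * indicator {1..2} v" for v
  proof (cases "v \<in> {1..2}")
    case True
    then have v: "1 \<le> v" "v \<le> 2" by auto
    define A where "A = 1 + (v - t)\<^sup>2"
    define B where "B = 1 + (t + v)\<^sup>2"
    have AB: "A \<le> B" unfolding A_def B_def using v t d by (simp add: power2_eq_square algebra_simps)
    have BA: "B - A = 4 * v * t" unfolding A_def B_def by (simp add: power2_eq_square algebra_simps)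
    have "fc m (v - t) - fc m (t + v) = A powr (-m) - B powr (-m)" unfolding fc_def A_def B_def by simp
    also have "\<dots> \<ge> m * B powr (-m-1) * (B - A)"
      using m AB by (intro powr_diff_lower) (auto simp: A_def)
    finally have d1: "fc m (v - t) - fc m (t + v) \<ge> m * B powr (-m-1) * (B - A)" .
    have "B \<le> 1 + (2+K)\<^sup>2" unfolding B_def using v t d
      by (intro add_left_mono power_mono) auto
    then have "B powr (-m-1) \<ge> Bm" unfolding Bm_def using m
      by (intro powr_mono2') (auto simp: B_def)
    moreover have "B - A \<ge> 4 * \<delta>"
    proof -
      have "1 * \<delta> \<le> v * t" using v t d by (intro mult_mono) auto
      then show ?thesis unfolding BA by simp
    qed
    ultimately have "m * B powr (-m-1) * (B - A) \<ge> m * Bm * (4 * \<delta>)"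
      using m d Bm_pos by (intro mult_mono) auto
    with d1 have d2: "fc m (v - t) - fc m (t + v) \<ge> m * Bm * (4 * \<delta>)" by linarith
    have "psi v \<ge> 2/5" using psi_ge_25 v by auto
    then have "psi v * (fc m (v - t) - fc m (t + v)) \<ge> 2/5 * (m * Bm * (4 * \<delta>))"
      using d2 m d Bm_pos by (intro mult_mono) auto
    then show ?thesis using True unfolding G_def \<alpha>_def by (simp add: algebra_simps)
  next
    case False
    have "G v \<le> 0"
    proof (cases "v \<ge> 0")
      case True
      have "fc m (t + v) \<le> fc m (v - t)" using m True t d
        by (intro fc_mono) (auto simp: power2_eq_square algebra_simps)
      then show ?thesis unfolding G_def using psi_nonneg[OF True] by (simp add: mult_nonneg_nonpos)
    next
      case False
      have "t * v \<le> 0" using False t d by (intro mult_nonneg_nonpos) auto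
      then have "fc m (v - t) \<le> fc m (t + v)" using m
        by (intro fc_mono) (auto simp: power2_eq_square algebra_simps)
      moreover have "psi v \<le> 0" using psi_pos[of "-v"] False psi_odd[of v] by simp
      ultimately show ?thesis unfolding G_def by (simp add: mult_nonpos_nonneg)
    qed
    then show ?thesis using False by simp
  qed
  have "(\<integral>v. G v \<partial>lborel) \<le> (\<integral>v. - \<alpha> * indicator {1..2::real} v \<partial>lborel)"
  proof (rule integral_mono)
    show "integrable lborel G" unfolding G_def using i1 i2
      by (simp add: algebra_simps)
    show "integrable lborel (\<lambda>v::real. - \<alpha> * indicator {1..2} v)" by simp
  qed (rule Gle)
  also have "\<dots> = - \<alpha>" by simp
  finally have "2 * (\<integral>y. fc m y * psi (y - t) \<partial>lborel) \<le> - \<alpha>" using two by simp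
  moreover have "\<alpha> = 2 * (4/5 * m * \<delta> * (1 + (2+K)\<^sup>2) powr (-m-1))" unfolding \<alpha>_def Bm_def by simp
  ultimately show ?thesis by linarith
qed

definition Ip :: "real \<Rightarrow> real" where "Ip p = (\<integral>y. (1 + y\<^sup>2) powr (-p) \<partial>lborel)"

lemma Ip_pos: "p > 1/2 \<Longrightarrow> Ip p > 0"
proof -
  assume p: "p > 1/2"
  have int: "integrable lborel (\<lambda>y::real. (1 + y\<^sup>2) powr - p)" using integrable_powr_neg[OF p] .
  have nn: "0 \<le> Ip p" unfolding Ip_def by (rule Bochner_Integration.integral_nonneg) simp
  moreover have "Ip p \<noteq> 0"
  proof
    assume "Ip p = 0"
    then have "AE x in lborel. (1 + (x::real)\<^sup>2) powr - p = 0"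
      unfolding Ip_def using integral_nonneg_eq_0_iff_AE[OF int] by simp
    then have "AE (x::real) in lborel. False" by simp
    then show False using AE_iff_measurable[of "UNIV::real set" lborel "\<lambda>_. False"] by simp
  qed
  ultimately show ?thesis by simp
qed

lemma fc_powr_eq: "fc m y * (1 + y\<^sup>2) powr s = (1 + y\<^sup>2) powr (-(m - s))"
  unfolding fc_def by (simp add: powr_add[symmetric])

lemma int_fc_powr: "m - s > 1/2 \<Longrightarrow> integrable lborel (\<lambda>y. fc m y * (1 + y\<^sup>2) powr s)"
  unfolding fc_powr_eq using integrable_powr_neg by blast

lemma integral_fc_powr: "(\<integral>y. fc m y * (1 + y\<^sup>2) powr s \<partial>lborel) = Ip (m - s)"
  unfolding fc_powr_eq Ip_def ..

lemma inv_powr_eqs: "(1 + (y::real)\<^sup>2) powr (-1) = 1 / (1 + y\<^sup>2)" "(1 + y\<^sup>2) powr (-2) = 1 / (1 + y\<^sup>2)\<^sup>2"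
  by (simp_all add: powr_minus divide_inverse)

lemma psi_sq_eq: "(psi y)\<^sup>2 = (1 + y\<^sup>2) powr (-1) - (1 + y\<^sup>2) powr (-2)"
proof -
  define z where "z = 1 + y\<^sup>2"
  have z: "z \<noteq> 0" unfolding z_def by simp
  have y2: "y\<^sup>2 = z - 1" unfolding z_def by simp
  have "(psi y)\<^sup>2 = y\<^sup>2 / z\<^sup>2" unfolding psi_def z_def by (simp add: power_divide)
  also have "\<dots> = 1 / z - 1 / z\<^sup>2" unfolding y2 using z by (simp add: field_simps power2_eq_square)
  finally show ?thesis unfolding inv_powr_eqs z_def .
qed

lemma dpsi_eq: "dpsi y = 2 * (1 + y\<^sup>2) powr (-2) - (1 + y\<^sup>2) powr (-1)"
proof -
  define z where "z = 1 + y\<^sup>2"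
  have z: "z \<noteq> 0" unfolding z_def by simp
  have y2: "y\<^sup>2 = z - 1" unfolding z_def by simp
  have "dpsi y = (1 - y\<^sup>2) / z\<^sup>2" unfolding dpsi_def z_def by simp
  also have "\<dots> = 2 * (1 / z\<^sup>2) - 1 / z" unfolding y2 using z by (simp add: field_simps power2_eq_square)
  finally show ?thesis unfolding inv_powr_eqs z_def .
qed

lemma integral_fc_psi: "m > 1/2 \<Longrightarrow> (\<integral>y. fc m y * psi y \<partial>lborel) = 0"
  using phi_neg[of m 0] by simp

lemma int_fc_psi_sq: "m > 1/2 \<Longrightarrow> integrable lborel (\<lambda>y. fc m y * (psi y)\<^sup>2)"
  unfolding psi_sq_eq right_diff_distrib using int_fc_powr[of m "-1"] int_fc_powr[of m "-2"] by simp

lemma integral_fc_psi_sq: "m > 1/2 \<Longrightarrow> (\<integral>y. fc m y * (psi y)\<^sup>2 \<partial>lborel) = Ip (m+1) - Ip (m+2)"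
  unfolding psi_sq_eq right_diff_distrib using int_fc_powr[of m "-1"] int_fc_powr[of m "-2"]
    integral_fc_powr[of m "-1"] integral_fc_powr[of m "-2"] by simp

lemma int_fc_dpsi: "m > 1/2 \<Longrightarrow> integrable lborel (\<lambda>y. fc m y * dpsi y)"
proof -
  assume m: "m > 1/2"
  have "(\<lambda>y. fc m y * dpsi y) = (\<lambda>y. 2 * (fc m y * (1 + y\<^sup>2) powr (-2)) - fc m y * (1 + y\<^sup>2) powr (-1))"
    unfolding dpsi_eq by (simp add: algebra_simps)
  then show ?thesis using m int_fc_powr[of m "-1"] int_fc_powr[of m "-2"] by simp
qed

lemma integral_fc_dpsi: "m > 1/2 \<Longrightarrow> (\<integral>y. fc m y * dpsi y \<partial>lborel) = 2 * Ip (m+2) - Ip (m+1)"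
proof -
  assume m: "m > 1/2"
  have "(\<lambda>y. fc m y * dpsi y) = (\<lambda>y. 2 * (fc m y * (1 + y\<^sup>2) powr (-2)) - fc m y * (1 + y\<^sup>2) powr (-1))"
    unfolding dpsi_eq by (simp add: algebra_simps)
  then show ?thesis using m int_fc_powr[of m "-1"] int_fc_powr[of m "-2"]
    integral_fc_powr[of m "-1"] integral_fc_powr[of m "-2"] by simp
qed

lemma Ip_rec1: "m > 1/2 \<Longrightarrow> Ip (m+1) = (2*m - 1) / (2*m) * Ip m"
  unfolding Ip_def using powr_recurrence by blast

lemma Ip_rec2: "m > 1/2 \<Longrightarrow> Ip (m+2) = (2*m + 1) / (2*m + 2) * Ip (m+1)"
  using powr_recurrence[of "m+1"] unfolding Ip_def by (simp add: add.assoc algebra_simps)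

definition sigma2 :: "real \<Rightarrow> real" where "sigma2 m = (2*m - 1) / (4*m*(m+1))"
definition mu :: "real \<Rightarrow> real" where "mu m = (2*m - 1) / (2*(m+1))"

lemma sigma2_eq: "m > 1/2 \<Longrightarrow> (Ip (m+1) - Ip (m+2)) / Ip m = sigma2 m"
proof -
  assume m: "m > 1/2"
  have I: "Ip m > 0" using Ip_pos m by simp
  define q where "q = (2*m - 1) / (2*m)"
  define r where "r = (2*m + 1) / (2*m + 2)"
  have r: "1 - r = 1 / (2*m + 2)" unfolding r_def using m by (simp add: divide_simps)
  have "Ip (m+1) - Ip (m+2) = q * Ip m * (1 - r)"
    unfolding Ip_rec2[OF m] Ip_rec1[OF m] q_def r_def by (simp add: algebra_simps)
  then have "(Ip (m+1) - Ip (m+2)) / Ip m = q * (1 - r)" using I by simp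
  also have "\<dots> = sigma2 m" unfolding r q_def sigma2_def using m by (simp add: divide_simps)
  finally show ?thesis .
qed

lemma mu_eq: "m > 1/2 \<Longrightarrow> (2 * Ip (m+2) - Ip (m+1)) / Ip m = mu m"
proof -
  assume m: "m > 1/2"
  have I: "Ip m > 0" using Ip_pos m by simp
  define q where "q = (2*m - 1) / (2*m)"
  define r where "r = (2*m + 1) / (2*m + 2)"
  have r: "2 * r - 1 = 2 * m / (2*m + 2)" unfolding r_def using m by (simp add: divide_simps)
  have "2 * Ip (m+2) - Ip (m+1) = q * Ip m * (2 * r - 1)"
    unfolding Ip_rec2[OF m] Ip_rec1[OF m] q_def r_def by (simp add: algebra_simps)
  then have "(2 * Ip (m+2) - Ip (m+1)) / Ip m = q * (2 * r - 1)" using I by simp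
  also have "\<dots> = mu m" unfolding r q_def mu_def using m by (simp add: divide_simps)
  finally show ?thesis .
qed

lemma mu_pos: "m > 1/2 \<Longrightarrow> mu m > 0" unfolding mu_def by simp

lemma ratio_eq: "m > 1/2 \<Longrightarrow> sigma2 m / (mu m)\<^sup>2 = (m + 1) / (m * (2 * m - 1))"
proof -
  assume m: "m > 1/2"
  have n: "2*m - 1 \<noteq> 0" "m \<noteq> 0" "m + 1 \<noteq> 0" using m by auto
  show ?thesis unfolding sigma2_def mu_def using m
    by (simp add: divide_simps) (simp add: algebra_simps power2_eq_square)
qed

lemma pvii_density_eq: "pvii_density m y = pvii_const m * fc m y"
  unfolding pvii_density_def fc_def ..

lemma pvii_const_eq: "pvii_const m = 1 / Ip m"
  unfolding pvii_const_def Ip_def ..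

lemma pair_ineq: "(1 + (T - y)\<^sup>2) * (1 + y\<^sup>2) \<ge> (1 + T\<^sup>2) / (2::real)"
proof -
  have "0 \<le> 1 + (T - 2*y)\<^sup>2 + 2 * ((T - y) * y)\<^sup>2" by simp
  moreover have "2 * ((1 + (T - y)\<^sup>2) * (1 + y\<^sup>2)) - (1 + T\<^sup>2) = 1 + (T - 2*y)\<^sup>2 + 2 * ((T - y) * y)\<^sup>2"
    by (simp add: power2_eq_square algebra_simps)
  ultimately have "1 + T\<^sup>2 \<le> 2 * ((1 + (T - y)\<^sup>2) * (1 + y\<^sup>2))" by linarith
  then show ?thesis by (simp add: pos_divide_le_eq)
qed

lemma root_le:
  fixes a b :: real
  assumes "0 \<le> a" "a ^ n \<le> b" "n > 0"
  shows "a \<le> b powr (1 / real n)"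
proof -
  have "a = (a ^ n) powr (1 / real n)"
  proof (cases "a = 0")
    case True then show ?thesis using assms by simp
  next
    case False
    then have "a > 0" using assms by simp
    then have "(a ^ n) powr (1 / real n) = (a powr real n) powr (1 / real n)" by (simp add: powr_realpow)
    also have "\<dots> = a" using \<open>a > 0\<close> assms by (simp add: powr_powr)
    finally show ?thesis by simp
  qed
  also have "\<dots> \<le> b powr (1 / real n)" using assms by (intro powr_mono2) auto
  finally show ?thesis .
qed

lemma W_bound_det:
  fixes y :: "nat \<Rightarrow> real" and T :: real
  assumes Q: "(\<Prod>i<n. (1 + (y i - T)\<^sup>2)) \<le> (\<Prod>i<n. (1 + (y i)\<^sup>2))" and n: "n > 0"
  shows "T\<^sup>2 \<le> 2 * (\<Prod>i<n. (1 + (y i)\<^sup>2) powr (2 / real n))"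
proof -
  define P where "P = (\<Prod>i<n. (1 + (y i)\<^sup>2))"
  have P0: "P > 0" unfolding P_def by (intro prod_pos) simp
  have "((1 + T\<^sup>2) / 2) ^ n = (\<Prod>i<n. (1 + T\<^sup>2) / 2)" by simp
  also have "\<dots> \<le> (\<Prod>i<n. (1 + (y i - T)\<^sup>2) * (1 + (y i)\<^sup>2))"
  proof (rule prod_mono)
    fix i assume "i \<in> {..<n}"
    have "(1 + (T - y i)\<^sup>2) * (1 + (y i)\<^sup>2) \<ge> (1 + T\<^sup>2) / 2" by (rule pair_ineq)
    moreover have "(T - y i)\<^sup>2 = (y i - T)\<^sup>2" by (simp add: power2_commute)
    ultimately show "0 \<le> (1 + T\<^sup>2) / 2 \<and> (1 + T\<^sup>2) / 2 \<le> (1 + (y i - T)\<^sup>2) * (1 + (y i)\<^sup>2)"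
      by (simp add: add_nonneg_nonneg)
  qed
  also have "\<dots> = (\<Prod>i<n. (1 + (y i - T)\<^sup>2)) * P" unfolding P_def by (simp add: prod.distrib)
  also have "\<dots> \<le> P * P" using Q P0 unfolding P_def by (intro mult_right_mono) auto
  finally have "((1 + T\<^sup>2) / 2) ^ n \<le> P * P" .
  then have "(1 + T\<^sup>2) / 2 \<le> (P * P) powr (1 / real n)" by (intro root_le) (auto simp: n)
  also have "(P * P) powr (1 / real n) = P powr (1 / real n) * P powr (1 / real n)"
    by (rule powr_mult)
  also have "\<dots> = P powr (1 / real n + 1 / real n)" by (rule powr_add[symmetric])
  also have "P powr (1 / real n + 1 / real n) = P powr (2 / real n)" by simp
  also have "\<dots> = (\<Prod>i<n. (1 + (y i)\<^sup>2) powr (2 / real n))" unfolding P_def by (rule prod_powr_distrib)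
  finally show ?thesis by simp
qed

lemma sum_psi_lip:
  assumes "(\<Sum>i<n. psi (y i - T)) = 0" "\<bar>T - t\<bar> \<le> h"
  shows "\<bar>\<Sum>i<n. psi (y i - t)\<bar> \<le> real n * h"
proof -
  have "\<bar>\<Sum>i<n. psi (y i - t)\<bar> = \<bar>\<Sum>i<n. (psi (y i - t) - psi (y i - T))\<bar>"
    using assms(1) by (simp add: sum_subtractf)
  also have "\<dots> \<le> (\<Sum>i<n. \<bar>psi (y i - t) - psi (y i - T)\<bar>)" by (rule sum_abs)
  also have "\<dots> \<le> (\<Sum>i<n. h)"
  proof (rule sum_mono)
    fix i
    have "\<bar>psi (y i - t) - psi (y i - T)\<bar> \<le> \<bar>(y i - t) - (y i - T)\<bar>" by (rule psi_lip)
    also have "\<dots> = \<bar>T - t\<bar>" by simp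
    finally show "\<bar>psi (y i - t) - psi (y i - T)\<bar> \<le> h" using assms(2) by simp
  qed
  finally show ?thesis by simp
qed

lemma sum_expand:
  assumes "(\<Sum>i<n. psi (y i - T)) = 0" "\<bar>T\<bar> \<le> 1"
  shows "\<exists>R. (\<Sum>i<n. psi (y i)) = T * ((\<Sum>i<n. dpsi (y i)) + R) \<and> \<bar>R\<bar> \<le> 5 * real n * \<bar>T\<bar>"
proof -
  have "\<forall>i. \<exists>r. psi (y i) - psi (y i - T) = T * (dpsi (y i) + r) \<and> \<bar>r\<bar> \<le> 5 * \<bar>T\<bar>"
    using psi_diff_expand[OF assms(2)] by blast
  then obtain r where r: "\<And>i. psi (y i) - psi (y i - T) = T * (dpsi (y i) + r i) \<and> \<bar>r i\<bar> \<le> 5 * \<bar>T\<bar>"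
    by metis
  have "(\<Sum>i<n. psi (y i)) = (\<Sum>i<n. psi (y i) - psi (y i - T))" using assms(1) by (simp add: sum_subtractf)
  also have "\<dots> = (\<Sum>i<n. T * (dpsi (y i) + r i))" using r by simp
  also have "\<dots> = T * ((\<Sum>i<n. dpsi (y i)) + (\<Sum>i<n. r i))" by (simp add: sum_distrib_left sum.distrib algebra_simps)
  finally have eq: "(\<Sum>i<n. psi (y i)) = T * ((\<Sum>i<n. dpsi (y i)) + (\<Sum>i<n. r i))" .
  have "\<bar>\<Sum>i<n. r i\<bar> \<le> (\<Sum>i<n. \<bar>r i\<bar>)" by (rule sum_abs)
  also have "\<dots> \<le> (\<Sum>i<n. 5 * \<bar>T\<bar>)" using r by (intro sum_mono) auto
  finally have "\<bar>\<Sum>i<n. r i\<bar> \<le> 5 * real n * \<bar>T\<bar>" by simp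
  with eq show ?thesis by blast
qed

locale pvii = prob_space M for M :: "'a measure" +
  fixes m \<theta> :: real and X :: "nat \<Rightarrow> 'a \<Rightarrow> real" and est :: "nat \<Rightarrow> (nat \<Rightarrow> real) \<Rightarrow> real"
  assumes m_gt: "m > 1/2"
    and indep: "indep_vars (\<lambda>_. borel) X UNIV"
    and distr: "\<And>i. distributed M lborel (X i) (\<lambda>x. ennreal (pvii_density m (x - \<theta>)))"
    and est_meas: "\<And>n. est n \<in> borel_measurable (PiM {..<n} (\<lambda>_. lborel))"
    and est_mle: "\<And>n x t. (\<Prod>i<n. pvii_density m (x i - t)) \<le> (\<Prod>i<n. pvii_density m (x i - est n x))"
begin

abbreviation "c \<equiv> pvii_const m"

lemma c_pos: "c > 0"
  unfolding pvii_const_eq using Ip_pos[OF m_gt] by simp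

lemma X_meas [measurable]: "X i \<in> borel_measurable M"
  using distributed_measurable[OF distr[of i]] by simp

lemma dens_nonneg: "0 \<le> pvii_density m y"
  unfolding pvii_density_eq using c_pos fc_pos[of m y] by simp

lemma EY_integrable:
  assumes h [measurable]: "h \<in> borel_measurable borel"
  shows "integrable M (\<lambda>\<omega>. h (X i \<omega> - \<theta>)) \<longleftrightarrow> integrable lborel (\<lambda>y. fc m y * h y)"
proof -
  have "integrable M (\<lambda>\<omega>. h (X i \<omega> - \<theta>)) \<longleftrightarrow> integrable lborel (\<lambda>x. pvii_density m (x - \<theta>) * h (x - \<theta>))"
    using distributed_integrable[OF distr[of i], of "\<lambda>x. h (x - \<theta>)"] dens_nonneg by simp
  also have "\<dots> \<longleftrightarrow> integrable lborel (\<lambda>x. pvii_density m x * h x)"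
    using lborel_integrable_real_affine_iff[of 1 "\<lambda>x. pvii_density m x * h x" "-\<theta>"] by simp
  also have "\<dots> \<longleftrightarrow> integrable lborel (\<lambda>x. fc m x * h x)"
    unfolding pvii_density_eq using c_pos by (simp add: mult.assoc)
  finally show ?thesis .
qed

lemma EY_integral:
  assumes h [measurable]: "h \<in> borel_measurable borel"
  shows "expectation (\<lambda>\<omega>. h (X i \<omega> - \<theta>)) = c * (\<integral>y. fc m y * h y \<partial>lborel)"
proof -
  have "expectation (\<lambda>\<omega>. h (X i \<omega> - \<theta>)) = (\<integral>x. pvii_density m (x - \<theta>) * h (x - \<theta>) \<partial>lborel)"
    using distributed_integral[OF distr[of i], of "\<lambda>x. h (x - \<theta>)"] dens_nonneg by simp
  also have "\<dots> = (\<integral>x. pvii_density m x * h x \<partial>lborel)"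
    using lborel_integral_real_affine[of 1 "\<lambda>x. pvii_density m (x - \<theta>) * h (x - \<theta>)" \<theta>] by simp
  also have "\<dots> = c * (\<integral>y. fc m y * h y \<partial>lborel)"
    unfolding pvii_density_eq by (simp add: mult.assoc)
  finally show ?thesis .
qed

lemma indep_h:
  assumes h [measurable]: "\<And>i. h i \<in> borel_measurable borel"
  shows "indep_vars (\<lambda>_. borel) (\<lambda>i \<omega>. h i (X i \<omega> - \<theta>)) I"
proof -
  have "indep_vars (\<lambda>_. borel) (\<lambda>i \<omega>. (\<lambda>x. h i (x - \<theta>)) (X i \<omega>)) UNIV"
    by (rule indep_vars_compose2[OF indep]) measurable
  then show ?thesis by (rule indep_vars_subset) auto
qed

lemma E_prod:
  assumes h [measurable]: "h \<in> borel_measurable borel"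
    and int: "integrable lborel (\<lambda>y. fc m y * h y)"
  shows "expectation (\<lambda>\<omega>. \<Prod>i<n. h (X i \<omega> - \<theta>)) = (c * (\<integral>y. fc m y * h y \<partial>lborel)) ^ n"
    and "integrable M (\<lambda>\<omega>. \<Prod>i<n. h (X i \<omega> - \<theta>))"
proof -
  have ii: "\<And>i. integrable M (\<lambda>\<omega>. h (X i \<omega> - \<theta>))" using EY_integrable[OF h] int by simp
  have ind: "indep_vars (\<lambda>_. borel) (\<lambda>i \<omega>. h (X i \<omega> - \<theta>)) {..<n}" by (rule indep_h) simp
  show "expectation (\<lambda>\<omega>. \<Prod>i<n. h (X i \<omega> - \<theta>)) = (c * (\<integral>y. fc m y * h y \<partial>lborel)) ^ n"
    using indep_vars_lebesgue_integral[OF _ ind ii] EY_integral[OF h] by simp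
  show "integrable M (\<lambda>\<omega>. \<Prod>i<n. h (X i \<omega> - \<theta>))"
    using indep_vars_integrable[OF _ ind ii] by simp
qed

lemma E_pair:
  assumes h [measurable]: "h \<in> borel_measurable borel"
    and int: "integrable lborel (\<lambda>y. fc m y * h y)" and ij: "i \<noteq> j"
  shows "expectation (\<lambda>\<omega>. h (X i \<omega> - \<theta>) * h (X j \<omega> - \<theta>)) = (c * (\<integral>y. fc m y * h y \<partial>lborel))\<^sup>2"
proof -
  have ii: "\<And>i. integrable M (\<lambda>\<omega>. h (X i \<omega> - \<theta>))" using EY_integrable[OF h] int by simp
  have ind: "indep_vars (\<lambda>_. borel) (\<lambda>i \<omega>. h (X i \<omega> - \<theta>)) {i, j}" by (rule indep_h) simp
  have "expectation (\<lambda>\<omega>. \<Prod>k\<in>{i,j}. h (X k \<omega> - \<theta>)) = (\<Prod>k\<in>{i,j}. expectation (\<lambda>\<omega>. h (X k \<omega> - \<theta>)))"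
    using indep_vars_lebesgue_integral[OF _ ind ii] by simp
  then show ?thesis using ij EY_integral[OF h] by (simp add: power2_eq_square)
qed

lemma E_sum_sq:
  assumes h [measurable]: "h \<in> borel_measurable borel"
    and bnd: "\<And>x. \<bar>h x\<bar> \<le> B" and zero: "(\<integral>y. fc m y * h y \<partial>lborel) = 0"
  shows "expectation (\<lambda>\<omega>. (\<Sum>i<n. h (X i \<omega> - \<theta>))\<^sup>2) = real n * (c * (\<integral>y. fc m y * (h y)\<^sup>2 \<partial>lborel))"
proof -
  have int1: "integrable lborel (\<lambda>y. fc m y * h y)"
    by (rule integrable_bounded_mult[OF fc_int[OF m_gt] h bnd])
  have B0: "0 \<le> B" using bnd[of 0] by linarith
  have bnd2: "\<bar>(h x)\<^sup>2\<bar> \<le> B\<^sup>2" for x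
  proof -
    have "\<bar>h x\<bar> ^ 2 \<le> B ^ 2" by (rule power_mono[OF bnd abs_ge_zero])
    then show ?thesis by simp
  qed
  have int2: "integrable lborel (\<lambda>y. fc m y * (h y)\<^sup>2)"
    by (rule integrable_bounded_mult[OF fc_int[OF m_gt] _ bnd2]) simp
  have intp: "integrable M (\<lambda>\<omega>. h (X i \<omega> - \<theta>) * h (X j \<omega> - \<theta>))" for i j
  proof (rule integrable_const_bound[where B="B*B"])
    have "norm (h (X i x - \<theta>) * h (X j x - \<theta>)) \<le> B * B" for x
      unfolding real_norm_def abs_mult by (rule mult_mono[OF bnd bnd B0 abs_ge_zero])
    then show "AE x in M. norm (h (X i x - \<theta>) * h (X j x - \<theta>)) \<le> B * B" by simp
  qed simp
  have eq: "(\<lambda>\<omega>. (\<Sum>i<n. h (X i \<omega> - \<theta>))\<^sup>2) = (\<lambda>\<omega>. \<Sum>i<n. \<Sum>j<n. h (X i \<omega> - \<theta>) * h (X j \<omega> - \<theta>))"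
    by (simp add: power2_eq_square sum_product)
  have "expectation (\<lambda>\<omega>. (\<Sum>i<n. h (X i \<omega> - \<theta>))\<^sup>2)
      = (\<Sum>i<n. \<Sum>j<n. expectation (\<lambda>\<omega>. h (X i \<omega> - \<theta>) * h (X j \<omega> - \<theta>)))"
    unfolding eq by (simp add: Bochner_Integration.integral_sum intp Bochner_Integration.integrable_sum)
  also have "\<dots> = (\<Sum>i<n. \<Sum>j<n. if i = j then c * (\<integral>y. fc m y * (h y)\<^sup>2 \<partial>lborel) else 0)"
  proof (intro sum.cong refl)
    fix i j
    show "expectation (\<lambda>\<omega>. h (X i \<omega> - \<theta>) * h (X j \<omega> - \<theta>)) =
        (if i = j then c * (\<integral>y. fc m y * (h y)\<^sup>2 \<partial>lborel) else 0)"
    proof (cases "i = j")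
      case True
      then show ?thesis using EY_integral[of "\<lambda>y. (h y)\<^sup>2" i] by (simp add: power2_eq_square)
    next
      case False
      then show ?thesis using E_pair[OF h int1 False] zero by simp
    qed
  qed
  also have "\<dots> = real n * (c * (\<integral>y. fc m y * (h y)\<^sup>2 \<partial>lborel))"
    by simp
  finally show ?thesis .
qed

lemma hoeffding_h:
  assumes h [measurable]: "h \<in> borel_measurable borel"
    and ab: "\<And>x. a \<le> h x \<and> h x \<le> b" and a_b: "a < b" and n: "n > 0" and e: "\<epsilon> \<ge> 0"
  defines "Eh \<equiv> c * (\<integral>y. fc m y * h y \<partial>lborel)"
  shows "prob {\<omega>\<in>space M. (\<Sum>i<n. h (X i \<omega> - \<theta>)) \<ge> real n * Eh + \<epsilon>} \<le> exp (-2 * \<epsilon>\<^sup>2 / (real n * (b - a)\<^sup>2))"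
    and "prob {\<omega>\<in>space M. (\<Sum>i<n. h (X i \<omega> - \<theta>)) \<le> real n * Eh - \<epsilon>} \<le> exp (-2 * \<epsilon>\<^sup>2 / (real n * (b - a)\<^sup>2))"
proof -
  interpret H: Hoeffding_ineq M "{..<n}" "\<lambda>i \<omega>. h (X i \<omega> - \<theta>)" "\<lambda>_. a" "\<lambda>_. b" "real n * Eh"
  proof unfold_locales
    show "indep_vars (\<lambda>_. borel) (\<lambda>i \<omega>. h (X i \<omega> - \<theta>)) {..<n}" by (rule indep_h) simp
    show "AE x in M. h (X i x - \<theta>) \<in> {a..b}" for i using ab by auto
    show "real n * Eh \<equiv> \<Sum>i<n. expectation (\<lambda>\<omega>. h (X i \<omega> - \<theta>))"
      unfolding Eh_def using EY_integral[OF h] by simp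
  qed simp
  have pos: "(\<Sum>i<n. (b - a)\<^sup>2) > 0" using a_b n by simp
  have eq: "(\<Sum>i<n. (b - a)\<^sup>2) = real n * (b - a)\<^sup>2" by simp
  show "prob {\<omega>\<in>space M. (\<Sum>i<n. h (X i \<omega> - \<theta>)) \<ge> real n * Eh + \<epsilon>} \<le> exp (-2 * \<epsilon>\<^sup>2 / (real n * (b - a)\<^sup>2))"
    using H.Hoeffding_ineq_ge[OF e pos] unfolding eq .
  show "prob {\<omega>\<in>space M. (\<Sum>i<n. h (X i \<omega> - \<theta>)) \<le> real n * Eh - \<epsilon>} \<le> exp (-2 * \<epsilon>\<^sup>2 / (real n * (b - a)\<^sup>2))"
    using H.Hoeffding_ineq_le[OF e pos] unfolding eq .
qed

lemma prod_dens: "(\<Prod>i<n. pvii_density m (x i - t)) = c ^ n * (\<Prod>i<n. (1 + (x i - t)\<^sup>2)) powr (-m)"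
  unfolding pvii_density_eq fc_def by (simp add: prod.distrib prod_powr_distrib)

lemma mle_Q: "(\<Prod>i<n. (1 + (x i - est n x)\<^sup>2)) \<le> (\<Prod>i<n. (1 + (x i - t)\<^sup>2))"
proof (rule ccontr)
  assume "\<not> ?thesis"
  then have lt: "(\<Prod>i<n. (1 + (x i - t)\<^sup>2)) < (\<Prod>i<n. (1 + (x i - est n x)\<^sup>2))" by simp
  have pos: "(\<Prod>i<n. (1 + (x i - t)\<^sup>2)) > 0" by (intro prod_pos) simp
  have "(\<Prod>i<n. (1 + (x i - est n x)\<^sup>2)) powr (-m) < (\<Prod>i<n. (1 + (x i - t)\<^sup>2)) powr (-m)"
    using m_gt pos lt by (intro powr_less_mono2_neg) auto
  then have "(\<Prod>i<n. pvii_density m (x i - est n x)) < (\<Prod>i<n. pvii_density m (x i - t))"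
    unfolding prod_dens using c_pos by simp
  with est_mle[where n=n and x=x and t=t] show False by simp
qed

lemma mle_score: "(\<Sum>i<n. psi (x i - est n x)) = 0"
proof -
  define L where "L t = (\<Sum>i<n. ln (1 + (x i - t)\<^sup>2))" for t
  have Lmin: "L (est n x) \<le> L t" for t
  proof -
    have "L t = ln (\<Prod>i<n. (1 + (x i - t)\<^sup>2))" unfolding L_def by (subst ln_prod) auto
    moreover have "L (est n x) = ln (\<Prod>i<n. (1 + (x i - est n x)\<^sup>2))" unfolding L_def by (subst ln_prod) auto
    moreover have "(\<Prod>i<n. (1 + (x i - est n x)\<^sup>2)) > 0" by (intro prod_pos) simp
    ultimately show ?thesis using mle_Q[where n=n and x=x and t=t] by simp
  qed
  have "(L has_real_derivative (\<Sum>i<n. (2 * (x i - est n x) * (-1)) / (1 + (x i - est n x)\<^sup>2))) (at (est n x))"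
    unfolding L_def by (intro DERIV_sum derivative_eq_intros refl) auto
  then have "(\<Sum>i<n. (2 * (x i - est n x) * (-1)) / (1 + (x i - est n x)\<^sup>2)) = 0"
    by (rule DERIV_local_min[where d=1]) (use Lmin in auto)
  moreover have "(\<Sum>i<n. (2 * (x i - est n x) * (-1)) / (1 + (x i - est n x)\<^sup>2)) = -2 * (\<Sum>i<n. psi (x i - est n x))"
    unfolding psi_def by (simp add: sum_distrib_left sum_negf)
  ultimately show ?thesis by simp
qed

definition Tn :: "nat \<Rightarrow> 'a \<Rightarrow> real" where
  "Tn n \<omega> = est n (restrict (\<lambda>i. X i \<omega>) {..<n}) - \<theta>"
definition Wn :: "nat \<Rightarrow> 'a \<Rightarrow> real" where
  "Wn n \<omega> = 2 * (\<Prod>i<n. (1 + (X i \<omega> - \<theta>)\<^sup>2) powr (2 / real n))"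
definition Sn :: "nat \<Rightarrow> 'a \<Rightarrow> real" where
  "Sn n \<omega> = (\<Sum>i<n. psi (X i \<omega> - \<theta>))"
definition Dn :: "nat \<Rightarrow> 'a \<Rightarrow> real" where
  "Dn n \<omega> = (\<Sum>i<n. dpsi (X i \<omega> - \<theta>))"

lemma Tn_meas [measurable]: "Tn n \<in> borel_measurable M"
proof -
  have r: "(\<lambda>\<omega>. restrict (\<lambda>i. X i \<omega>) {..<n}) \<in> measurable M (PiM {..<n} (\<lambda>_. lborel))"
    by (rule measurable_restrict) simp
  have "(\<lambda>\<omega>. est n (restrict (\<lambda>i. X i \<omega>) {..<n})) \<in> borel_measurable M"
    using measurable_comp[OF r est_meas[of n]] by (simp add: comp_def)
  then show ?thesis unfolding Tn_def by simp
qed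

lemma Wn_meas [measurable]: "Wn n \<in> borel_measurable M"
  unfolding Wn_def by measurable
lemma Sn_meas [measurable]: "Sn n \<in> borel_measurable M"
  unfolding Sn_def by measurable
lemma Dn_meas [measurable]: "Dn n \<in> borel_measurable M"
  unfolding Dn_def by measurable

lemma Tn_score: "(\<Sum>i<n. psi ((X i \<omega> - \<theta>) - Tn n \<omega>)) = 0"
proof -
  define xs where "xs = restrict (\<lambda>i. X i \<omega>) {..<n}"
  have "(\<Sum>i<n. psi (xs i - est n xs)) = 0" by (rule mle_score)
  moreover have "(\<Sum>i<n. psi (xs i - est n xs)) = (\<Sum>i<n. psi ((X i \<omega> - \<theta>) - Tn n \<omega>))"
    unfolding Tn_def xs_def by (intro sum.cong) auto
  ultimately show ?thesis by simp
qed

lemma Tn_W: "n > 0 \<Longrightarrow> (Tn n \<omega>)\<^sup>2 \<le> Wn n \<omega>"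
proof -
  assume n: "n > 0"
  define xs where "xs = restrict (\<lambda>i. X i \<omega>) {..<n}"
  have "(\<Prod>i<n. (1 + (xs i - est n xs)\<^sup>2)) \<le> (\<Prod>i<n. (1 + (xs i - \<theta>)\<^sup>2))" by (rule mle_Q)
  moreover have "(\<Prod>i<n. (1 + (xs i - est n xs)\<^sup>2)) = (\<Prod>i<n. (1 + ((X i \<omega> - \<theta>) - Tn n \<omega>)\<^sup>2))"
    unfolding Tn_def xs_def by (intro prod.cong) auto
  moreover have "(\<Prod>i<n. (1 + (xs i - \<theta>)\<^sup>2)) = (\<Prod>i<n. (1 + (X i \<omega> - \<theta>)\<^sup>2))"
    unfolding xs_def by (intro prod.cong) auto
  ultimately have "(\<Prod>i<n. (1 + ((X i \<omega> - \<theta>) - Tn n \<omega>)\<^sup>2)) \<le> (\<Prod>i<n. (1 + (X i \<omega> - \<theta>)\<^sup>2))" by simp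
  from W_bound_det[OF this n] show ?thesis unfolding Wn_def .
qed

end

lemma powr_convex_bound:
  fixes z s a :: real
  assumes z: "z \<ge> 1" and s: "0 \<le> s" "s \<le> a" and a: "a > 0"
  shows "z powr s \<le> 1 + (s / a) * (z powr a - 1)"
proof -
  define L where "L = ln z"
  define t where "t = s / a"
  have t: "0 \<le> t" "t \<le> 1" unfolding t_def using s a by auto
  have "z powr s = exp ((1 - t) *\<^sub>R 0 + t *\<^sub>R (a * L))"
    using z a unfolding L_def t_def by (simp add: powr_def)
  also have "\<dots> \<le> (1 - t) * exp 0 + t * exp (a * L)"
    by (rule convex_onD[OF exp_convex t]) auto
  also have "exp (a * L) = z powr a" using z unfolding L_def by (simp add: powr_def mult.commute)
  finally show ?thesis unfolding t_def by (simp add: algebra_simps)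
qed

lemma one_plus_pow_le_exp:
  fixes x :: real
  assumes "0 \<le> 1 + x / real n" "n > 0"
  shows "(1 + x / real n) ^ n \<le> exp x"
proof -
  have "(1 + x / real n) ^ n \<le> (exp (x / real n)) ^ n"
    using assms by (intro power_mono) (auto simp: exp_ge_add_one_self add.commute)
  also have "\<dots> = exp x" using assms by (simp add: exp_of_nat_mult[symmetric])
  finally show ?thesis .
qed

context pvii
begin

definition a0 :: real where "a0 = (m - 1/2) / 2"
definition Mf :: "real \<Rightarrow> real" where "Mf s = c * Ip (m - s)"

lemma a0_pos: "a0 > 0" unfolding a0_def using m_gt by simp
lemma m_a0: "m - a0 > 1/2" unfolding a0_def using m_gt by (simp add: field_simps)

lemma E_powr:
  assumes s: "m - s > 1/2"
  shows "expectation (\<lambda>\<omega>. \<Prod>i<n. (1 + (X i \<omega> - \<theta>)\<^sup>2) powr s) = (Mf s) ^ n"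
    and "integrable M (\<lambda>\<omega>. \<Prod>i<n. (1 + (X i \<omega> - \<theta>)\<^sup>2) powr s)"
  using E_prod[of "\<lambda>y. (1 + y\<^sup>2) powr s" n] int_fc_powr[OF s] integral_fc_powr[of m s]
  unfolding Mf_def by auto

lemma Mf_eq: "m - s > 1/2 \<Longrightarrow> Mf s = expectation (\<lambda>\<omega>. (1 + (X 0 \<omega> - \<theta>)\<^sup>2) powr s)"
  using E_powr(1)[of s 1] by simp

lemma Mf_int: "m - s > 1/2 \<Longrightarrow> integrable M (\<lambda>\<omega>. (1 + (X 0 \<omega> - \<theta>)\<^sup>2) powr s)"
  using E_powr(2)[of s 1] by simp

lemma Mf_bound:
  assumes s: "0 \<le> s" "s \<le> a0"
  shows "Mf s \<le> 1 + (s / a0) * (Mf a0 - 1)"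
proof -
  have ma: "m - a0 > 1/2" by (rule m_a0)
  then have ms: "m - s > 1/2" using s by linarith
  have "Mf s = expectation (\<lambda>\<omega>. (1 + (X 0 \<omega> - \<theta>)\<^sup>2) powr s)" using Mf_eq[OF ms] .
  also have "\<dots> \<le> expectation (\<lambda>\<omega>. 1 + (s / a0) * ((1 + (X 0 \<omega> - \<theta>)\<^sup>2) powr a0 - 1))"
  proof (rule integral_mono)
    show "integrable M (\<lambda>\<omega>. (1 + (X 0 \<omega> - \<theta>)\<^sup>2) powr s)" by (rule Mf_int[OF ms])
    show "integrable M (\<lambda>\<omega>. 1 + (s / a0) * ((1 + (X 0 \<omega> - \<theta>)\<^sup>2) powr a0 - 1))"
      using Mf_int[OF ma] by simp
    show "(1 + (X 0 \<omega> - \<theta>)\<^sup>2) powr s \<le> 1 + (s / a0) * ((1 + (X 0 \<omega> - \<theta>)\<^sup>2) powr a0 - 1)" for \<omega>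
      using s a0_pos by (intro powr_convex_bound) auto
  qed
  also have "\<dots> = 1 + (s / a0) * (Mf a0 - 1)"
    using Mf_int[OF ma] Mf_eq[OF ma] prob_space by (simp add: algebra_simps)
  finally show ?thesis .
qed

lemma Mf_nonneg: "Mf s \<ge> 0"
  unfolding Mf_def using c_pos Ip_def
  by (simp add: Ip_def Bochner_Integration.integral_nonneg)

lemma Wn_sq: "(Wn n \<omega>)\<^sup>2 = 4 * (\<Prod>i<n. (1 + (X i \<omega> - \<theta>)\<^sup>2) powr (4 / real n))"
proof -
  have "(Wn n \<omega>)\<^sup>2 = 4 * (\<Prod>i<n. ((1 + (X i \<omega> - \<theta>)\<^sup>2) powr (2 / real n))\<^sup>2)"
    unfolding Wn_def by (simp add: power_mult_distrib prod_power_distrib)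
  also have "\<dots> = 4 * (\<Prod>i<n. (1 + (X i \<omega> - \<theta>)\<^sup>2) powr (4 / real n))"
  proof -
    have "((1 + y\<^sup>2) powr (2 / real n))\<^sup>2 = (1 + y\<^sup>2) powr (4 / real n)" for y :: real
    proof -
      have "((1 + y\<^sup>2) powr (2 / real n))\<^sup>2 = (1 + y\<^sup>2) powr (2 / real n) * (1 + y\<^sup>2) powr (2 / real n)"
        by (simp add: power2_eq_square)
      also have "\<dots> = (1 + y\<^sup>2) powr (2 / real n + 2 / real n)" by (rule powr_add[symmetric])
      also have "2 / real n + 2 / real n = 4 / real n" by simp
      finally show ?thesis .
    qed
    then show ?thesis by simp
  qed
  finally show ?thesis .
qed

lemma EW2:
  assumes n: "n > 0" "4 / real n \<le> a0"
  shows "integrable M (\<lambda>\<omega>. (Wn n \<omega>)\<^sup>2)"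
    and "expectation (\<lambda>\<omega>. (Wn n \<omega>)\<^sup>2) \<le> 4 * exp (4 * (Mf a0 - 1) / a0)"
proof -
  have ms: "m - 4 / real n > 1/2" using n m_a0 by linarith
  show "integrable M (\<lambda>\<omega>. (Wn n \<omega>)\<^sup>2)" unfolding Wn_sq using E_powr(2)[OF ms] by simp
  have "expectation (\<lambda>\<omega>. (Wn n \<omega>)\<^sup>2) = 4 * (Mf (4 / real n)) ^ n" unfolding Wn_sq using E_powr(1)[OF ms] by simp
  also have "\<dots> \<le> 4 * (1 + (4 * (Mf a0 - 1) / a0) / real n) ^ n"
  proof -
    have "Mf (4 / real n) \<le> 1 + (4 / real n / a0) * (Mf a0 - 1)" using n by (intro Mf_bound) auto
    also have "\<dots> = 1 + (4 * (Mf a0 - 1) / a0) / real n" by (simp add: field_simps)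
    finally show ?thesis using Mf_nonneg by (intro mult_left_mono power_mono) auto
  qed
  also have "\<dots> \<le> 4 * exp (4 * (Mf a0 - 1) / a0)"
  proof -
    have "Mf (4 / real n) \<le> 1 + (4 / real n / a0) * (Mf a0 - 1)" using n by (intro Mf_bound) auto
    then have "0 \<le> 1 + (4 * (Mf a0 - 1) / a0) / real n" using Mf_nonneg[of "4 / real n"] by (simp add: field_simps)
    then show ?thesis using n by (intro mult_left_mono one_plus_pow_le_exp) auto
  qed
  finally show "expectation (\<lambda>\<omega>. (Wn n \<omega>)\<^sup>2) \<le> 4 * exp (4 * (Mf a0 - 1) / a0)" .
qed

lemma EW_int:
  assumes n: "n > 0" "2 / real n \<le> a0"
  shows "integrable M (Wn n)"
proof -
  have ms: "m - 2 / real n > 1/2" using n m_a0 by linarith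
  show ?thesis unfolding Wn_def using E_powr(2)[OF ms] by simp
qed

lemma P_W:
  assumes n: "n > 0" and K: "K > 0"
  shows "prob {\<omega>\<in>space M. Wn n \<omega> \<ge> K\<^sup>2} \<le> (Mf a0 / (K\<^sup>2 / 2) powr (a0 / 2)) ^ n"
proof -
  have ma: "m - a0 > 1/2" by (rule m_a0)
  define Z where "Z \<omega> = (\<Prod>i<n. (1 + (X i \<omega> - \<theta>)\<^sup>2) powr a0)" for \<omega>
  define t where "t = ((K\<^sup>2 / 2) powr (a0 / 2)) ^ n"
  have tpos: "t > 0" unfolding t_def using K by simp
  have sub: "{\<omega>\<in>space M. Wn n \<omega> \<ge> K\<^sup>2} \<subseteq> {\<omega>\<in>space M. Z \<omega> \<ge> t}"
  proof safe
    fix \<omega> assume \<omega>: "\<omega> \<in> space M" "K\<^sup>2 \<le> Wn n \<omega>"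
    define P2 where "P2 = (\<Prod>i<n. (1 + (X i \<omega> - \<theta>)\<^sup>2) powr (2 / real n))"
    have "K\<^sup>2 / 2 \<le> P2" using \<omega>(2) unfolding Wn_def P2_def by simp
    then have "(K\<^sup>2 / 2) powr (a0 * real n / 2) \<le> P2 powr (a0 * real n / 2)"
      using a0_pos by (intro powr_mono2) auto
    also have "P2 powr (a0 * real n / 2) = Z \<omega>"
    proof -
      have "P2 powr (a0 * real n / 2) = (\<Prod>i<n. ((1 + (X i \<omega> - \<theta>)\<^sup>2) powr (2 / real n)) powr (a0 * real n / 2))"
        unfolding P2_def by (rule prod_powr_distrib)
      also have "\<dots> = Z \<omega>" unfolding Z_def using n by (intro prod.cong refl) (simp add: powr_powr)
      finally show ?thesis .
    qed
    also have "(K\<^sup>2 / 2) powr (a0 * real n / 2) = t"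
    proof -
      have "(K\<^sup>2 / 2) powr (a0 * real n / 2) = ((K\<^sup>2 / 2) powr (a0 / 2)) powr real n"
        by (simp add: powr_powr)
      also have "\<dots> = t" unfolding t_def using K by (simp add: powr_realpow)
      finally show ?thesis .
    qed
    finally show "t \<le> Z \<omega>" by simp
  qed
  have intZ: "integrable M Z" unfolding Z_def using E_powr(2)[OF ma] by simp
  have EZ: "expectation Z = (Mf a0) ^ n" unfolding Z_def using E_powr(1)[OF ma] by simp
  have "prob {\<omega>\<in>space M. Wn n \<omega> \<ge> K\<^sup>2} \<le> prob {\<omega>\<in>space M. Z \<omega> \<ge> t}"
    by (rule finite_measure_mono[OF sub]) (measurable, simp add: Z_def)
  also have "\<dots> \<le> expectation Z / t"
    by (rule integral_Markov_inequality_measure[OF intZ _ _ tpos, where A="space M"]) (auto simp: Z_def intro!: AE_I2 prod_nonneg)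
  also have "\<dots> = (Mf a0 / (K\<^sup>2 / 2) powr (a0 / 2)) ^ n" unfolding EZ t_def by (simp add: power_divide)
  finally show ?thesis .
qed

end

context pvii
begin

lemma psi_in: "-1/2 \<le> psi x" "psi x \<le> 1/2"
  using psi_bound[of x] by (auto simp: abs_le_iff)

lemma c_Ip: "c = 1 / Ip m" by (rule pvii_const_eq)

lemma E_psi_shift: "expectation (\<lambda>\<omega>. psi ((X i \<omega> - \<theta>) - t)) = c * (\<integral>y. fc m y * psi (y - t) \<partial>lborel)"
  using EY_integral[of "\<lambda>y. psi (y - t)" i] by simp

definition kap :: "real \<Rightarrow> real \<Rightarrow> real" where
  "kap \<delta> K = c * (4/5 * m * \<delta> * (1 + (2+K)\<^sup>2) powr (-m-1))"

lemma kap_pos: "\<delta> > 0 \<Longrightarrow> kap \<delta> K > 0"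
  unfolding kap_def using c_pos m_gt by simp

lemma Epsi_pos_side:
  assumes "0 < \<delta>" "\<delta> \<le> t" "t \<le> K"
  shows "c * (\<integral>y. fc m y * psi (y - t) \<partial>lborel) \<le> - kap \<delta> K"
  using mult_left_mono[OF phi_bound[OF m_gt assms], of c] c_pos unfolding kap_def by simp

lemma Epsi_neg_side:
  assumes "0 < \<delta>" "\<delta> \<le> t" "t \<le> K"
  shows "c * (\<integral>y. fc m y * psi (y - (-t)) \<partial>lborel) \<ge> kap \<delta> K"
  using Epsi_pos_side[OF assms] phi_neg[of m t] by simp

lemma P_single_pos:
  assumes n: "n > 0" and d: "0 < \<delta>" "\<delta> \<le> t" "t \<le> K"
  shows "prob {\<omega>\<in>space M. (\<Sum>i<n. psi ((X i \<omega> - \<theta>) - t)) \<ge> - (real n * kap \<delta> K / 2)}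
           \<le> exp (- (real n * (kap \<delta> K)\<^sup>2 / 2))"
proof -
  define k where "k = kap \<delta> K"
  have k: "k > 0" unfolding k_def using kap_pos d by simp
  define Eh where "Eh = c * (\<integral>y. fc m y * psi (y - t) \<partial>lborel)"
  have Eh: "Eh \<le> -k" unfolding Eh_def k_def by (rule Epsi_pos_side[OF d])
  have e: "real n * k / 2 \<ge> 0" using k by simp
  have "prob {\<omega>\<in>space M. (\<Sum>i<n. psi ((X i \<omega> - \<theta>) - t)) \<ge> - (real n * k / 2)}
      \<le> prob {\<omega>\<in>space M. (\<Sum>i<n. psi ((X i \<omega> - \<theta>) - t)) \<ge> real n * Eh + real n * k / 2}"
  proof (rule finite_measure_mono)
    have "real n * Eh \<le> real n * (-k)" using Eh by (intro mult_left_mono) auto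
    then show "{\<omega>\<in>space M. (\<Sum>i<n. psi ((X i \<omega> - \<theta>) - t)) \<ge> - (real n * k / 2)}
      \<subseteq> {\<omega>\<in>space M. (\<Sum>i<n. psi ((X i \<omega> - \<theta>) - t)) \<ge> real n * Eh + real n * k / 2}" by auto
  qed measurable
  also have "\<dots> \<le> exp (-2 * (real n * k / 2)\<^sup>2 / (real n * (1/2 - (-1/2))\<^sup>2))"
    unfolding Eh_def
    by (rule hoeffding_h(1)[of "\<lambda>y. psi (y - t)" "-1/2" "1/2" n]) (use n e psi_in in auto)
  also have "-2 * (real n * k / 2)\<^sup>2 / (real n * (1/2 - (-1/2))\<^sup>2) = - (real n * k\<^sup>2 / 2)"
    using n by (simp add: power2_eq_square field_simps)
  finally show ?thesis unfolding k_def .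
qed

lemma P_single_neg:
  assumes n: "n > 0" and d: "0 < \<delta>" "\<delta> \<le> t" "t \<le> K"
  shows "prob {\<omega>\<in>space M. (\<Sum>i<n. psi ((X i \<omega> - \<theta>) - (-t))) \<le> real n * kap \<delta> K / 2}
           \<le> exp (- (real n * (kap \<delta> K)\<^sup>2 / 2))"
proof -
  define k where "k = kap \<delta> K"
  have k: "k > 0" unfolding k_def using kap_pos d by simp
  define Eh where "Eh = c * (\<integral>y. fc m y * psi (y - (-t)) \<partial>lborel)"
  have Eh: "Eh \<ge> k" unfolding Eh_def k_def by (rule Epsi_neg_side[OF d])
  have e: "real n * k / 2 \<ge> 0" using k by simp
  have "prob {\<omega>\<in>space M. (\<Sum>i<n. psi ((X i \<omega> - \<theta>) - (-t))) \<le> real n * k / 2}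
      \<le> prob {\<omega>\<in>space M. (\<Sum>i<n. psi ((X i \<omega> - \<theta>) - (-t))) \<le> real n * Eh - real n * k / 2}"
  proof (rule finite_measure_mono)
    have "real n * Eh \<ge> real n * k" using Eh by (intro mult_left_mono) auto
    then show "{\<omega>\<in>space M. (\<Sum>i<n. psi ((X i \<omega> - \<theta>) - (-t))) \<le> real n * k / 2}
      \<subseteq> {\<omega>\<in>space M. (\<Sum>i<n. psi ((X i \<omega> - \<theta>) - (-t))) \<le> real n * Eh - real n * k / 2}" by auto
  qed measurable
  also have "\<dots> \<le> exp (-2 * (real n * k / 2)\<^sup>2 / (real n * (1/2 - (-1/2))\<^sup>2))"
    unfolding Eh_def
    by (rule hoeffding_h(2)[of "\<lambda>y. psi (y - (-t))" "-1/2" "1/2" n]) (use n e psi_in in auto)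
  also have "-2 * (real n * k / 2)\<^sup>2 / (real n * (1/2 - (-1/2))\<^sup>2) = - (real n * k\<^sup>2 / 2)"
    using n by (simp add: power2_eq_square field_simps)
  finally show ?thesis unfolding k_def .
qed

lemma E_dpsi: "c * (\<integral>y. fc m y * dpsi y \<partial>lborel) = mu m"
  using integral_fc_dpsi[OF m_gt] mu_eq[OF m_gt] c_Ip by simp

lemma E_Sn_sq: "expectation (\<lambda>\<omega>. (Sn n \<omega>)\<^sup>2) = real n * sigma2 m"
proof -
  have "expectation (\<lambda>\<omega>. (Sn n \<omega>)\<^sup>2) = real n * (c * (\<integral>y. fc m y * (psi y)\<^sup>2 \<partial>lborel))"
    unfolding Sn_def by (rule E_sum_sq[OF psi_meas psi_bound integral_fc_psi[OF m_gt]])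
  also have "c * (\<integral>y. fc m y * (psi y)\<^sup>2 \<partial>lborel) = sigma2 m"
    using integral_fc_psi_sq[OF m_gt] sigma2_eq[OF m_gt] c_Ip by simp
  finally show ?thesis .
qed

lemma P_D:
  assumes n: "n > 0" and eta: "\<eta> > 0"
  shows "prob {\<omega>\<in>space M. \<bar>Dn n \<omega> - real n * mu m\<bar> \<ge> real n * \<eta>} \<le> 2 * exp (- (real n * \<eta>\<^sup>2 / 2))"
proof -
  have e: "real n * \<eta> \<ge> 0" using eta by simp
  have b: "-1 \<le> dpsi x \<and> dpsi x \<le> 1" for x using dpsi_bound[of x] by (auto simp: abs_le_iff)
  have "prob {\<omega>\<in>space M. \<bar>Dn n \<omega> - real n * mu m\<bar> \<ge> real n * \<eta>}
     \<le> prob ({\<omega>\<in>space M. Dn n \<omega> \<ge> real n * mu m + real n * \<eta>} \<union> {\<omega>\<in>space M. Dn n \<omega> \<le> real n * mu m - real n * \<eta>})"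
    by (rule finite_measure_mono) (auto, measurable)
  also have "\<dots> \<le> prob {\<omega>\<in>space M. Dn n \<omega> \<ge> real n * mu m + real n * \<eta>} + prob {\<omega>\<in>space M. Dn n \<omega> \<le> real n * mu m - real n * \<eta>}"
    by (rule measure_Un_le) measurable
  also have "prob {\<omega>\<in>space M. Dn n \<omega> \<ge> real n * mu m + real n * \<eta>} \<le> exp (-2 * (real n * \<eta>)\<^sup>2 / (real n * (1 - (-1))\<^sup>2))"
    using hoeffding_h(1)[OF dpsi_meas b _ n e] unfolding E_dpsi Dn_def by simp
  also have "prob {\<omega>\<in>space M. Dn n \<omega> \<le> real n * mu m - real n * \<eta>} \<le> exp (-2 * (real n * \<eta>)\<^sup>2 / (real n * (1 - (-1))\<^sup>2))"
    using hoeffding_h(2)[OF dpsi_meas b _ n e] unfolding E_dpsi Dn_def by simp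
  also have "-2 * (real n * \<eta>)\<^sup>2 / (real n * (1 - (-1))\<^sup>2) = - (real n * \<eta>\<^sup>2 / 2)"
    using n by (simp add: power2_eq_square field_simps)
  finally show ?thesis by simp
qed

end

lemma grid_exists:
  fixes s \<delta> T :: real
  assumes s: "s > 0" and T: "\<delta> \<le> T" "T \<le> \<delta> + real N * s"
  shows "\<exists>j\<le>N. \<bar>T - (\<delta> + real j * s)\<bar> \<le> s"
proof -
  define q where "q = (T - \<delta>) / s"
  have q0: "q \<ge> 0" unfolding q_def using s T by simp
  have qN: "q \<le> real N" unfolding q_def using s T by (simp add: divide_le_eq mult.commute)
  define j where "j = nat \<lfloor>q\<rfloor>"
  have jq: "real j \<le> q" "q < real j + 1" unfolding j_def using q0 by linarith+
  have jN: "j \<le> N" using jq qN by linarith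
  have "\<delta> + real j * s \<le> T" using jq s unfolding q_def by (simp add: le_divide_eq)
  moreover have "T < \<delta> + (real j + 1) * s" using jq s unfolding q_def by (simp add: divide_less_eq)
  ultimately have "\<bar>T - (\<delta> + real j * s)\<bar> \<le> s" by (simp add: algebra_simps)
  with jN show ?thesis by blast
qed

context pvii
begin

lemma P_mid:
  assumes n: "n > 0" and d: "0 < \<delta>" "\<delta> < K"
  shows "prob {\<omega>\<in>space M. \<delta> \<le> \<bar>Tn n \<omega>\<bar> \<and> \<bar>Tn n \<omega>\<bar> \<le> K}
     \<le> 2 * real (nat \<lceil>2 * (K - \<delta>) / kap \<delta> K\<rceil> + 2) * exp (- (real n * (kap \<delta> K)\<^sup>2 / 2))"
proof -
  define k where "k = kap \<delta> K"
  have k: "k > 0" unfolding k_def using kap_pos d by simp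
  define N where "N = nat \<lceil>2 * (K - \<delta>) / k\<rceil> + 1"
  have N1: "real N \<ge> 1" unfolding N_def by simp
  have N2: "real N \<ge> 2 * (K - \<delta>) / k" unfolding N_def by linarith
  define s where "s = (K - \<delta>) / real N"
  have s0: "s > 0" unfolding s_def using d N1 by simp
  have sk: "s \<le> k / 2"
  proof -
    have "K - \<delta> \<le> real N * (k / 2)" using N2 k by (simp add: divide_le_eq field_simps)
    then show ?thesis unfolding s_def using N1 by (simp add: divide_le_eq mult.commute)
  qed
  have KN: "\<delta> + real N * s = K" unfolding s_def using N1 by simp
  define tj where "tj j = \<delta> + real j * s" for j :: nat
  have tj: "\<delta> \<le> tj j \<and> tj j \<le> K" if "j \<le> N" for j
  proof -
    have h: "real j * s \<le> real N * s" using that s0 by (intro mult_right_mono) auto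
    have h0: "0 \<le> real j * s" using s0 by simp
    show ?thesis unfolding tj_def using h h0 KN by linarith
  qed
  define A where "A j = {\<omega>\<in>space M. (\<Sum>i<n. psi ((X i \<omega> - \<theta>) - tj j)) \<ge> - (real n * k / 2)}" for j
  define B where "B j = {\<omega>\<in>space M. (\<Sum>i<n. psi ((X i \<omega> - \<theta>) - (- tj j))) \<le> real n * k / 2}" for j
  have AB_sets: "A j \<in> sets M" "B j \<in> sets M" for j unfolding A_def B_def by measurable
  have sub: "{\<omega>\<in>space M. \<delta> \<le> \<bar>Tn n \<omega>\<bar> \<and> \<bar>Tn n \<omega>\<bar> \<le> K} \<subseteq> (\<Union>j\<in>{..N}. A j) \<union> (\<Union>j\<in>{..N}. B j)"
  proof
    fix \<omega> assume \<omega>: "\<omega> \<in> {\<omega>\<in>space M. \<delta> \<le> \<bar>Tn n \<omega>\<bar> \<and> \<bar>Tn n \<omega>\<bar> \<le> K}"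
    then have sp: "\<omega> \<in> space M" and T: "\<delta> \<le> \<bar>Tn n \<omega>\<bar>" "\<bar>Tn n \<omega>\<bar> \<le> K" by auto
    have score: "(\<Sum>i<n. psi ((\<lambda>i. X i \<omega> - \<theta>) i - Tn n \<omega>)) = 0" using Tn_score by simp
    show "\<omega> \<in> (\<Union>j\<in>{..N}. A j) \<union> (\<Union>j\<in>{..N}. B j)"
    proof (cases "Tn n \<omega> \<ge> 0")
      case True
      then obtain j where j: "j \<le> N" "\<bar>Tn n \<omega> - tj j\<bar> \<le> s"
        using grid_exists[OF s0, of \<delta> "Tn n \<omega>" N] T KN unfolding tj_def by auto
      have "\<bar>\<Sum>i<n. psi ((\<lambda>i. X i \<omega> - \<theta>) i - tj j)\<bar> \<le> real n * (k / 2)"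
        using sum_psi_lip[OF score] j(2) sk by (meson order_trans)
      then have "\<omega> \<in> A j" unfolding A_def using sp by auto
      then show ?thesis using j by auto
    next
      case False
      then obtain j where j: "j \<le> N" "\<bar>- Tn n \<omega> - tj j\<bar> \<le> s"
        using grid_exists[OF s0, of \<delta> "- Tn n \<omega>" N] T KN unfolding tj_def by auto
      have "\<bar>Tn n \<omega> - (- tj j)\<bar> = \<bar>- Tn n \<omega> - tj j\<bar>" by simp
      then have "\<bar>Tn n \<omega> - (- tj j)\<bar> \<le> k / 2" using j(2) sk by linarith
      then have "\<bar>\<Sum>i<n. psi ((\<lambda>i. X i \<omega> - \<theta>) i - (- tj j))\<bar> \<le> real n * (k / 2)"
        using sum_psi_lip[OF score] by blast
      then have "\<omega> \<in> B j" unfolding B_def using sp by auto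
      then show ?thesis using j by auto
    qed
  qed
  have p1: "prob {\<omega>\<in>space M. \<delta> \<le> \<bar>Tn n \<omega>\<bar> \<and> \<bar>Tn n \<omega>\<bar> \<le> K} \<le> prob ((\<Union>j\<in>{..N}. A j) \<union> (\<Union>j\<in>{..N}. B j))"
    by (rule finite_measure_mono[OF sub]) (use AB_sets in auto)
  have p2: "prob ((\<Union>j\<in>{..N}. A j) \<union> (\<Union>j\<in>{..N}. B j)) \<le> prob (\<Union>j\<in>{..N}. A j) + prob (\<Union>j\<in>{..N}. B j)"
    by (rule measure_Un_le) (use AB_sets in auto)
  have "prob (\<Union>j\<in>{..N}. A j) \<le> (\<Sum>j\<in>{..N}. prob (A j))"
    by (rule measure_UNION_le) (use AB_sets in auto)
  also have "\<dots> \<le> (\<Sum>j\<in>{..N}. exp (- (real n * k\<^sup>2 / 2)))"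
  proof (rule sum_mono)
    fix j assume "j \<in> {..N}"
    then have "\<delta> \<le> tj j" "tj j \<le> K" using tj by auto
    then show "prob (A j) \<le> exp (- (real n * k\<^sup>2 / 2))"
      unfolding A_def k_def using P_single_pos[OF n d(1)] by blast
  qed
  finally have p3: "prob (\<Union>j\<in>{..N}. A j) \<le> (\<Sum>j\<in>{..N}. exp (- (real n * k\<^sup>2 / 2)))" .
  have "prob (\<Union>j\<in>{..N}. B j) \<le> (\<Sum>j\<in>{..N}. prob (B j))"
    by (rule measure_UNION_le) (use AB_sets in auto)
  also have "\<dots> \<le> (\<Sum>j\<in>{..N}. exp (- (real n * k\<^sup>2 / 2)))"
  proof (rule sum_mono)
    fix j assume "j \<in> {..N}"
    then have "\<delta> \<le> tj j" "tj j \<le> K" using tj by auto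
    then show "prob (B j) \<le> exp (- (real n * k\<^sup>2 / 2))"
      unfolding B_def k_def using P_single_neg[OF n d(1)] by blast
  qed
  finally have p4: "prob (\<Union>j\<in>{..N}. B j) \<le> (\<Sum>j\<in>{..N}. exp (- (real n * k\<^sup>2 / 2)))" .
  have p5: "(\<Sum>j\<in>{..N}. exp (- (real n * k\<^sup>2 / 2))) + (\<Sum>j\<in>{..N}. exp (- (real n * k\<^sup>2 / 2)))
      = 2 * real (nat \<lceil>2 * (K - \<delta>) / kap \<delta> K\<rceil> + 2) * exp (- (real n * (kap \<delta> K)\<^sup>2 / 2))"
    unfolding N_def k_def by simp
  from p1 p2 p3 p4 p5 show ?thesis by linarith
qed

end

lemma n3_geom:
  fixes q :: real
  assumes q: "0 \<le> q" "q < 1"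
  shows "(\<lambda>n. real n ^ 3 * q ^ n) \<longlonglongrightarrow> 0"
proof -
  define r where "r = root 3 q"
  have r0: "0 \<le> r" unfolding r_def using q by simp
  have r1: "r < 1" unfolding r_def using q by simp
  have rq: "r ^ 3 = q" unfolding r_def using q by simp
  have "(\<lambda>n. real n * r ^ n) \<longlonglongrightarrow> 0" using powser_times_n_limit_0[of r] r0 r1 by simp
  then have "(\<lambda>n. (real n * r ^ n) ^ 3) \<longlonglongrightarrow> 0 ^ 3" by (intro tendsto_intros)
  moreover have "(real n * r ^ n) ^ 3 = real n ^ 3 * q ^ n" for n
    by (simp add: power_mult_distrib rq[symmetric] power_mult[symmetric] mult.commute)
  ultimately show ?thesis by simp
qed

lemma n3_exp:
  fixes a :: real
  assumes "a > 0"
  shows "(\<lambda>n. real n ^ 3 * exp (- (real n * a))) \<longlonglongrightarrow> 0"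
proof -
  have "exp (- (real n * a)) = (exp (-a)) ^ n" for n
    by (simp add: exp_of_nat_mult[symmetric])
  then show ?thesis using n3_geom[of "exp (-a)"] assms by simp
qed

context pvii
begin

definition KK :: real where "KK = sqrt (2 * (2 * Mf a0 + 2) powr (2 / a0)) + 1"
definition rW :: real where "rW = Mf a0 / (KK\<^sup>2 / 2) powr (a0 / 2)"
definition dl :: "real \<Rightarrow> real" where "dl \<epsilon> = min 1 (\<epsilon> / 10)"
definition Pb :: "real \<Rightarrow> nat \<Rightarrow> real" where
  "Pb \<epsilon> n = rW ^ n + 2 * real (nat \<lceil>2 * (KK - dl \<epsilon>) / kap (dl \<epsilon>) KK\<rceil> + 2) * exp (- (real n * (kap (dl \<epsilon>) KK)\<^sup>2 / 2))
     + 2 * exp (- (real n * (\<epsilon> / 2)\<^sup>2 / 2))"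

lemma KK_gt1: "KK > 1"
proof -
  have "0 < 2 * Mf a0 + 2" using Mf_nonneg[of a0] by linarith
  then have "0 < sqrt (2 * (2 * Mf a0 + 2) powr (2 / a0))" by simp
  then show ?thesis unfolding KK_def by linarith
qed

lemma rW_bounds: "0 \<le> rW" "rW < 1"
proof -
  have Mf0: "Mf a0 \<ge> 0" by (rule Mf_nonneg)
  define B0 where "B0 = (2 * Mf a0 + 2) powr (2 / a0)"
  have "0 < 2 * Mf a0 + 2" using Mf0 by linarith
  then have B0: "B0 > 0" unfolding B0_def by simp
  have "KK\<^sup>2 / 2 \<ge> B0"
  proof -
    have "sqrt (2 * B0) \<le> KK" unfolding KK_def B0_def by simp
    then have "(sqrt (2 * B0))\<^sup>2 \<le> KK\<^sup>2" using B0 by (intro power_mono) auto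
    moreover have "(sqrt (2 * B0))\<^sup>2 = 2 * B0" using B0 by simp
    ultimately show ?thesis by simp
  qed
  then have "(KK\<^sup>2 / 2) powr (a0 / 2) \<ge> B0 powr (a0 / 2)" using a0_pos B0 by (intro powr_mono2) auto
  moreover have "B0 powr (a0 / 2) = 2 * Mf a0 + 2"
    unfolding B0_def using a0_pos Mf0 by (simp add: powr_powr)
  ultimately have den: "(KK\<^sup>2 / 2) powr (a0 / 2) \<ge> 2 * Mf a0 + 2" by simp
  then have dpos: "(KK\<^sup>2 / 2) powr (a0 / 2) > 0" using Mf0 by linarith
  show "0 \<le> rW" unfolding rW_def using Mf0 dpos by simp
  have "Mf a0 < (KK\<^sup>2 / 2) powr (a0 / 2)" using den Mf0 by linarith
  then show "rW < 1" unfolding rW_def using dpos by simp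
qed

lemma dl_props: "0 < \<epsilon> \<Longrightarrow> 0 < dl \<epsilon> \<and> dl \<epsilon> \<le> 1 \<and> dl \<epsilon> \<le> \<epsilon> / 10 \<and> dl \<epsilon> < KK"
  unfolding dl_def using KK_gt1 by auto

lemma Pb_lim: "0 < \<epsilon> \<Longrightarrow> (\<lambda>n. real n ^ 3 * Pb \<epsilon> n) \<longlonglongrightarrow> 0"
proof -
  assume e: "0 < \<epsilon>"
  define k where "k = kap (dl \<epsilon>) KK"
  have k: "k > 0" unfolding k_def using kap_pos dl_props[OF e] by simp
  define A where "A = 2 * real (nat \<lceil>2 * (KK - dl \<epsilon>) / k\<rceil> + 2)"
  have eq: "real n ^ 3 * Pb \<epsilon> n = real n ^ 3 * rW ^ n + A * (real n ^ 3 * exp (- (real n * (k\<^sup>2 / 2))))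
     + 2 * (real n ^ 3 * exp (- (real n * ((\<epsilon> / 2)\<^sup>2 / 2))))" for n
    unfolding Pb_def A_def k_def by (simp add: algebra_simps)
  have l1: "(\<lambda>n. real n ^ 3 * rW ^ n) \<longlonglongrightarrow> 0" using n3_geom rW_bounds by blast
  have l2: "(\<lambda>n. real n ^ 3 * exp (- (real n * (k\<^sup>2 / 2)))) \<longlonglongrightarrow> 0" by (rule n3_exp) (use k in simp)
  have l3: "(\<lambda>n. real n ^ 3 * exp (- (real n * ((\<epsilon> / 2)\<^sup>2 / 2)))) \<longlonglongrightarrow> 0" by (rule n3_exp) (use e in simp)
  have "(\<lambda>n. real n ^ 3 * rW ^ n + A * (real n ^ 3 * exp (- (real n * (k\<^sup>2 / 2))))
     + 2 * (real n ^ 3 * exp (- (real n * ((\<epsilon> / 2)\<^sup>2 / 2))))) \<longlonglongrightarrow> 0 + A * 0 + 2 * 0"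
    by (intro tendsto_add tendsto_mult l1 l2 l3 tendsto_const)
  then show ?thesis unfolding eq by simp
qed

definition Gd :: "real \<Rightarrow> nat \<Rightarrow> 'a set" where
  "Gd \<epsilon> n = {\<omega>\<in>space M. \<bar>Tn n \<omega>\<bar> < dl \<epsilon> \<and> \<bar>Dn n \<omega> - real n * mu m\<bar> < real n * (\<epsilon> / 2)}"

lemma Gd_sets [measurable]: "Gd \<epsilon> n \<in> sets M" unfolding Gd_def by measurable

lemma prob_bad:
  assumes e: "0 < \<epsilon>" and n: "n > 0"
  shows "prob (space M - Gd \<epsilon> n) \<le> Pb \<epsilon> n"
proof -
  let ?d = "dl \<epsilon>"
  have d: "0 < ?d" "?d < KK" using dl_props[OF e] by auto
  have sub: "space M - Gd \<epsilon> n \<subseteq> {\<omega>\<in>space M. Wn n \<omega> \<ge> KK\<^sup>2} \<union> {\<omega>\<in>space M. ?d \<le> \<bar>Tn n \<omega>\<bar> \<and> \<bar>Tn n \<omega>\<bar> \<le> KK}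
      \<union> {\<omega>\<in>space M. \<bar>Dn n \<omega> - real n * mu m\<bar> \<ge> real n * (\<epsilon> / 2)}"
  proof
    fix \<omega> assume \<omega>: "\<omega> \<in> space M - Gd \<epsilon> n"
    show "\<omega> \<in> {\<omega>\<in>space M. Wn n \<omega> \<ge> KK\<^sup>2} \<union> {\<omega>\<in>space M. ?d \<le> \<bar>Tn n \<omega>\<bar> \<and> \<bar>Tn n \<omega>\<bar> \<le> KK}
      \<union> {\<omega>\<in>space M. \<bar>Dn n \<omega> - real n * mu m\<bar> \<ge> real n * (\<epsilon> / 2)}"
    proof (cases "\<bar>Tn n \<omega>\<bar> > KK")
      case True
      then have "KK\<^sup>2 < \<bar>Tn n \<omega>\<bar>\<^sup>2" using KK_gt1 by (intro power_strict_mono) auto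
      then have "KK\<^sup>2 < (Tn n \<omega>)\<^sup>2" by simp
      then have "KK\<^sup>2 \<le> Wn n \<omega>" using Tn_W[OF n, of \<omega>] by linarith
      then show ?thesis using \<omega> by auto
    next
      case False
      then show ?thesis using \<omega> unfolding Gd_def by auto
    qed
  qed
  have S1: "{\<omega>\<in>space M. Wn n \<omega> \<ge> KK\<^sup>2} \<in> sets M" by measurable
  have S2: "{\<omega>\<in>space M. ?d \<le> \<bar>Tn n \<omega>\<bar> \<and> \<bar>Tn n \<omega>\<bar> \<le> KK} \<in> sets M" by measurable
  have S3: "{\<omega>\<in>space M. \<bar>Dn n \<omega> - real n * mu m\<bar> \<ge> real n * (\<epsilon> / 2)} \<in> sets M" by measurable
  have q1: "prob (space M - Gd \<epsilon> n) \<le> prob ({\<omega>\<in>space M. Wn n \<omega> \<ge> KK\<^sup>2} \<union> {\<omega>\<in>space M. ?d \<le> \<bar>Tn n \<omega>\<bar> \<and> \<bar>Tn n \<omega>\<bar> \<le> KK}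
      \<union> {\<omega>\<in>space M. \<bar>Dn n \<omega> - real n * mu m\<bar> \<ge> real n * (\<epsilon> / 2)})"
    using sub S1 S2 S3 by (intro finite_measure_mono) auto
  have q2: "prob ({\<omega>\<in>space M. Wn n \<omega> \<ge> KK\<^sup>2} \<union> {\<omega>\<in>space M. ?d \<le> \<bar>Tn n \<omega>\<bar> \<and> \<bar>Tn n \<omega>\<bar> \<le> KK}
      \<union> {\<omega>\<in>space M. \<bar>Dn n \<omega> - real n * mu m\<bar> \<ge> real n * (\<epsilon> / 2)}) \<le> prob ({\<omega>\<in>space M. Wn n \<omega> \<ge> KK\<^sup>2} \<union> {\<omega>\<in>space M. ?d \<le> \<bar>Tn n \<omega>\<bar> \<and> \<bar>Tn n \<omega>\<bar> \<le> KK})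
      + prob {\<omega>\<in>space M. \<bar>Dn n \<omega> - real n * mu m\<bar> \<ge> real n * (\<epsilon> / 2)}"
    using S1 S2 S3 by (intro measure_Un_le) auto
  have q3: "prob ({\<omega>\<in>space M. Wn n \<omega> \<ge> KK\<^sup>2} \<union> {\<omega>\<in>space M. ?d \<le> \<bar>Tn n \<omega>\<bar> \<and> \<bar>Tn n \<omega>\<bar> \<le> KK})
      \<le> prob {\<omega>\<in>space M. Wn n \<omega> \<ge> KK\<^sup>2} + prob {\<omega>\<in>space M. ?d \<le> \<bar>Tn n \<omega>\<bar> \<and> \<bar>Tn n \<omega>\<bar> \<le> KK}"
    using S1 S2 S3 by (intro measure_Un_le) auto
  have p1: "prob {\<omega>\<in>space M. Wn n \<omega> \<ge> KK\<^sup>2} \<le> rW ^ n"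
    unfolding rW_def using P_W[OF n, of KK] KK_gt1 by simp
  have p2: "prob {\<omega>\<in>space M. ?d \<le> \<bar>Tn n \<omega>\<bar> \<and> \<bar>Tn n \<omega>\<bar> \<le> KK}
     \<le> 2 * real (nat \<lceil>2 * (KK - ?d) / kap ?d KK\<rceil> + 2) * exp (- (real n * (kap ?d KK)\<^sup>2 / 2))"
    by (rule P_mid[OF n d])
  have p3: "prob {\<omega>\<in>space M. \<bar>Dn n \<omega> - real n * mu m\<bar> \<ge> real n * (\<epsilon> / 2)} \<le> 2 * exp (- (real n * (\<epsilon> / 2)\<^sup>2 / 2))"
    using P_D[OF n, of "\<epsilon>/2"] e by simp
  from q1 q2 q3 p1 p2 p3 show ?thesis unfolding Pb_def by linarith
qed

end

lemma aux_frac2: "(n::real) > 0 \<Longrightarrow> n * S / (n * X)\<^sup>2 = S / (n * X\<^sup>2)"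
  by (cases "X = 0") (simp_all add: field_simps power2_eq_square)

lemma aux_frac: "n > 0 \<Longrightarrow> X > 0 \<Longrightarrow> ((real n)\<^sup>2 / 4) / (real n * X\<^sup>2) = real n / (4 * X\<^sup>2)"
  by (simp add: field_simps power2_eq_square)

context pvii
begin

lemma Sn_bound: "\<bar>Sn n \<omega>\<bar> \<le> real n / 2"
proof -
  have "\<bar>Sn n \<omega>\<bar> \<le> (\<Sum>i<n. \<bar>psi (X i \<omega> - \<theta>)\<bar>)" unfolding Sn_def by (rule sum_abs)
  also have "\<dots> \<le> (\<Sum>i<n. 1/2)" by (intro sum_mono psi_bound)
  finally show ?thesis by simp
qed

lemma Sn_sq_bound: "(Sn n \<omega>)\<^sup>2 \<le> (real n)\<^sup>2 / 4"
proof -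
  have "\<bar>Sn n \<omega>\<bar>\<^sup>2 \<le> (real n / 2)\<^sup>2" by (intro power_mono Sn_bound) auto
  then show ?thesis by (simp add: power_divide)
qed

lemma pointwise_good:
  assumes e: "0 < \<epsilon>" "\<epsilon> \<le> mu m / 2" and n: "n > 0" and \<omega>: "\<omega> \<in> Gd \<epsilon> n"
  shows "(Sn n \<omega>)\<^sup>2 / (real n * (mu m + \<epsilon>)\<^sup>2) \<le> real n * (Tn n \<omega>)\<^sup>2"
    and "real n * (Tn n \<omega>)\<^sup>2 \<le> (Sn n \<omega>)\<^sup>2 / (real n * (mu m - \<epsilon>)\<^sup>2)"
proof -
  let ?T = "Tn n \<omega>"
  let ?mu = "mu m"
  have mu: "?mu > 0" using mu_pos[OF m_gt] .
  have dl: "0 < dl \<epsilon>" "dl \<epsilon> \<le> 1" "dl \<epsilon> \<le> \<epsilon> / 10" using dl_props[OF e(1)] by auto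
  have T: "\<bar>?T\<bar> < dl \<epsilon>" and D: "\<bar>Dn n \<omega> - real n * ?mu\<bar> < real n * (\<epsilon> / 2)"
    using \<omega> unfolding Gd_def by auto
  have score: "(\<Sum>i<n. psi ((\<lambda>i. X i \<omega> - \<theta>) i - ?T)) = 0" using Tn_score by simp
  obtain R where R: "(\<Sum>i<n. psi ((\<lambda>i. X i \<omega> - \<theta>) i)) = ?T * ((\<Sum>i<n. dpsi ((\<lambda>i. X i \<omega> - \<theta>) i)) + R)"
      "\<bar>R\<bar> \<le> 5 * real n * \<bar>?T\<bar>"
    using sum_expand[OF score] T dl by fastforce
  define D' where "D' = Dn n \<omega> + R"
  have SD: "Sn n \<omega> = ?T * D'" unfolding Sn_def Dn_def D'_def using R(1) by simp
  have "\<bar>R\<bar> \<le> 5 * real n * dl \<epsilon>"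
    using R(2) T by (meson less_imp_le mult_left_mono of_nat_0_le_iff order_trans zero_le_numeral mult_nonneg_nonneg)
  also have "\<dots> \<le> 5 * real n * (\<epsilon> / 10)" using dl by (intro mult_left_mono) auto
  finally have Rb0: "\<bar>R\<bar> \<le> 5 * real n * (\<epsilon> / 10)" .
  have "5 * real n * (\<epsilon> / 10) = real n * (\<epsilon> / 2)" by simp
  with Rb0 have Rb: "\<bar>R\<bar> \<le> real n * (\<epsilon> / 2)" by linarith
  have D1: "Dn n \<omega> - real n * ?mu < real n * (\<epsilon> / 2)" "-(Dn n \<omega> - real n * ?mu) < real n * (\<epsilon> / 2)"
    using abs_less_iff[THEN iffD1, OF D] by auto
  have R1: "R \<le> real n * (\<epsilon> / 2)" "- R \<le> real n * (\<epsilon> / 2)" using abs_le_iff[THEN iffD1, OF Rb] by auto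
  have e1: "real n * (?mu - \<epsilon>) = real n * ?mu - 2 * (real n * (\<epsilon> / 2))" by (simp add: algebra_simps)
  have e2: "real n * (?mu + \<epsilon>) = real n * ?mu + 2 * (real n * (\<epsilon> / 2))" by (simp add: algebra_simps)
  have lo: "real n * (?mu - \<epsilon>) \<le> D'" and hi: "D' \<le> real n * (?mu + \<epsilon>)"
    unfolding D'_def e1 e2 using D1 R1 by linarith+
  have pos: "0 < real n * (?mu - \<epsilon>)" using n e mu by simp
  have D'pos: "D' > 0" using lo pos by linarith
  have eqT: "real n * ?T\<^sup>2 = real n * (Sn n \<omega>)\<^sup>2 / D'\<^sup>2"
    using SD D'pos by (simp add: power_mult_distrib)
  have S0: "0 \<le> real n * (Sn n \<omega>)\<^sup>2" by simp
  have "real n * (Sn n \<omega>)\<^sup>2 / D'\<^sup>2 \<le> real n * (Sn n \<omega>)\<^sup>2 / (real n * (?mu - \<epsilon>))\<^sup>2"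
    using lo pos n by (intro divide_left_mono S0 power_mono mult_pos_pos) auto
  also have "\<dots> = (Sn n \<omega>)\<^sup>2 / (real n * (?mu - \<epsilon>)\<^sup>2)" using n by (intro aux_frac2) simp
  finally show "real n * ?T\<^sup>2 \<le> (Sn n \<omega>)\<^sup>2 / (real n * (?mu - \<epsilon>)\<^sup>2)" unfolding eqT .
  have "(Sn n \<omega>)\<^sup>2 / (real n * (?mu + \<epsilon>)\<^sup>2) = real n * (Sn n \<omega>)\<^sup>2 / (real n * (?mu + \<epsilon>))\<^sup>2"
    using n by (intro aux_frac2[symmetric]) simp
  also have "\<dots> \<le> real n * (Sn n \<omega>)\<^sup>2 / D'\<^sup>2"
    using hi D'pos n by (intro divide_left_mono S0 power_mono mult_pos_pos) auto
  finally show "(Sn n \<omega>)\<^sup>2 / (real n * (?mu + \<epsilon>)\<^sup>2) \<le> real n * ?T\<^sup>2" unfolding eqT .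
qed

lemma W_trick:
  fixes W :: real and n :: nat
  assumes "n > 0" "W \<ge> 0"
  shows "real n * W \<le> W\<^sup>2 / real n + real n ^ 3"
proof (cases "W \<ge> (real n)\<^sup>2")
  case True
  then have "(real n)\<^sup>2 * W \<le> W * W" using assms by (intro mult_right_mono) auto
  then have "real n * W \<le> W\<^sup>2 / real n" using assms by (simp add: field_simps power2_eq_square)
  moreover have "0 \<le> real n ^ 3" by simp
  ultimately show ?thesis by linarith
next
  case False
  then have "real n * W \<le> real n * (real n)\<^sup>2" using assms by (intro mult_left_mono) auto
  then have "real n * W \<le> real n ^ 3" by (simp add: power2_eq_square power3_eq_cube)
  moreover have "0 \<le> W\<^sup>2 / real n" by simp
  ultimately show ?thesis by linarith
qed

lemma pointwise_U:
  assumes e: "0 < \<epsilon>" "\<epsilon> \<le> mu m / 2" and n: "n > 0" and \<omega>: "\<omega> \<in> space M"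
  shows "real n * (Tn n \<omega>)\<^sup>2 \<le> (Sn n \<omega>)\<^sup>2 / (real n * (mu m - \<epsilon>)\<^sup>2) + (Wn n \<omega>)\<^sup>2 / real n
      + real n ^ 3 * indicator (space M - Gd \<epsilon> n) \<omega>"
proof (cases "\<omega> \<in> Gd \<epsilon> n")
  case True
  have "0 \<le> (Wn n \<omega>)\<^sup>2 / real n" by simp
  moreover have "real n ^ 3 * indicator (space M - Gd \<epsilon> n) \<omega> = (0::real)" using True by simp
  ultimately show ?thesis using pointwise_good(2)[OF e n True] by linarith
next
  case False
  have W0: "Wn n \<omega> \<ge> 0" unfolding Wn_def by (simp add: prod_nonneg)
  have "real n * (Tn n \<omega>)\<^sup>2 \<le> real n * Wn n \<omega>" using Tn_W[OF n] by (intro mult_left_mono) auto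
  also have "\<dots> \<le> (Wn n \<omega>)\<^sup>2 / real n + real n ^ 3" by (rule W_trick[OF n W0])
  finally have a: "real n * (Tn n \<omega>)\<^sup>2 \<le> (Wn n \<omega>)\<^sup>2 / real n + real n ^ 3" .
  have b: "real n ^ 3 * indicator (space M - Gd \<epsilon> n) \<omega> = real n ^ 3" using False \<omega> by simp
  have c: "0 \<le> (Sn n \<omega>)\<^sup>2 / (real n * (mu m - \<epsilon>)\<^sup>2)" by simp
  from a b c show ?thesis by linarith
qed

lemma pointwise_L:
  assumes e: "0 < \<epsilon>" "\<epsilon> \<le> mu m / 2" and n: "n > 0" and \<omega>: "\<omega> \<in> space M"
  shows "(Sn n \<omega>)\<^sup>2 / (real n * (mu m + \<epsilon>)\<^sup>2) - real n / (4 * (mu m + \<epsilon>)\<^sup>2) * indicator (space M - Gd \<epsilon> n) \<omega>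
      \<le> real n * (Tn n \<omega>)\<^sup>2"
proof (cases "\<omega> \<in> Gd \<epsilon> n")
  case True
  then show ?thesis using pointwise_good(1)[OF e n True] by simp
next
  case False
  have mu: "mu m > 0" using mu_pos[OF m_gt] .
  have p: "0 < real n * (mu m + \<epsilon>)\<^sup>2" using n e mu by simp
  have "(Sn n \<omega>)\<^sup>2 / (real n * (mu m + \<epsilon>)\<^sup>2) \<le> ((real n)\<^sup>2 / 4) / (real n * (mu m + \<epsilon>)\<^sup>2)"
    using Sn_sq_bound p by (intro divide_right_mono) auto
  also have "\<dots> = real n / (4 * (mu m + \<epsilon>)\<^sup>2)" using n mu e by (intro aux_frac) auto
  finally have "(Sn n \<omega>)\<^sup>2 / (real n * (mu m + \<epsilon>)\<^sup>2) - real n / (4 * (mu m + \<epsilon>)\<^sup>2) \<le> 0" by simp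
  also have "0 \<le> real n * (Tn n \<omega>)\<^sup>2" by simp
  finally show ?thesis using False \<omega> by simp
qed

end

context pvii
begin

definition CW :: real where "CW = 4 * exp (4 * (Mf a0 - 1) / a0)"

lemma T2_int:
  assumes n: "n > 0" "2 / real n \<le> a0"
  shows "integrable M (\<lambda>\<omega>. (Tn n \<omega>)\<^sup>2)"
proof (rule Bochner_Integration.integrable_bound[OF EW_int[OF n]])
  show "(\<lambda>\<omega>. (Tn n \<omega>)\<^sup>2) \<in> borel_measurable M" by measurable
  have "norm ((Tn n \<omega>)\<^sup>2) \<le> norm (Wn n \<omega>)" for \<omega>
    using Tn_W[OF n(1), of \<omega>] by simp
  then show "AE \<omega> in M. norm ((Tn n \<omega>)\<^sup>2) \<le> norm (Wn n \<omega>)" by simp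
qed

lemma Sn2_int: "integrable M (\<lambda>\<omega>. (Sn n \<omega>)\<^sup>2)"
proof (rule integrable_const_bound[where B="(real n)\<^sup>2 / 4"])
  show "AE \<omega> in M. norm ((Sn n \<omega>)\<^sup>2) \<le> (real n)\<^sup>2 / 4" using Sn_sq_bound by simp
qed simp

lemma ind_int: "integrable M (\<lambda>\<omega>. indicator (space M - Gd \<epsilon> n) \<omega> :: real)"
  by (rule integrable_real_indicator) (auto simp: Gd_sets less_top[symmetric])

lemma prob_ind: "expectation (\<lambda>\<omega>. indicator (space M - Gd \<epsilon> n) \<omega> :: real) = prob (space M - Gd \<epsilon> n)"
  by (simp add: Int_absorb2 Diff_subset)

lemma exp_upper:
  assumes e: "0 < \<epsilon>" "\<epsilon> \<le> mu m / 2" and n: "n > 0" "4 / real n \<le> a0"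
  shows "real n * expectation (\<lambda>\<omega>. (Tn n \<omega>)\<^sup>2) \<le> sigma2 m / (mu m - \<epsilon>)\<^sup>2 + CW / real n + real n ^ 3 * Pb \<epsilon> n"
proof -
  have n2: "2 / real n \<le> a0" using n by (smt (verit) divide_right_mono of_nat_0_le_iff)
  have mu: "mu m > 0" using mu_pos[OF m_gt] .
  have "real n * expectation (\<lambda>\<omega>. (Tn n \<omega>)\<^sup>2) = expectation (\<lambda>\<omega>. real n * (Tn n \<omega>)\<^sup>2)" by simp
  also have "\<dots> \<le> expectation (\<lambda>\<omega>. (Sn n \<omega>)\<^sup>2 / (real n * (mu m - \<epsilon>)\<^sup>2) + (Wn n \<omega>)\<^sup>2 / real n
      + real n ^ 3 * indicator (space M - Gd \<epsilon> n) \<omega>)"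
  proof (rule integral_mono_AE)
    show "integrable M (\<lambda>\<omega>. real n * (Tn n \<omega>)\<^sup>2)" using T2_int[OF n(1) n2] by simp
    show "integrable M (\<lambda>\<omega>. (Sn n \<omega>)\<^sup>2 / (real n * (mu m - \<epsilon>)\<^sup>2) + (Wn n \<omega>)\<^sup>2 / real n
      + real n ^ 3 * indicator (space M - Gd \<epsilon> n) \<omega>)"
      using Sn2_int EW2(1)[OF n] ind_int by simp
    show "AE \<omega> in M. real n * (Tn n \<omega>)\<^sup>2 \<le> (Sn n \<omega>)\<^sup>2 / (real n * (mu m - \<epsilon>)\<^sup>2) + (Wn n \<omega>)\<^sup>2 / real n
      + real n ^ 3 * indicator (space M - Gd \<epsilon> n) \<omega>"
      using pointwise_U[OF e n(1)] by (intro AE_I2) auto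
  qed
  also have "\<dots> = expectation (\<lambda>\<omega>. (Sn n \<omega>)\<^sup>2) / (real n * (mu m - \<epsilon>)\<^sup>2) + expectation (\<lambda>\<omega>. (Wn n \<omega>)\<^sup>2) / real n
      + real n ^ 3 * prob (space M - Gd \<epsilon> n)"
    using Sn2_int EW2(1)[OF n] ind_int prob_ind by simp
  also have "expectation (\<lambda>\<omega>. (Sn n \<omega>)\<^sup>2) / (real n * (mu m - \<epsilon>)\<^sup>2) = sigma2 m / (mu m - \<epsilon>)\<^sup>2"
    unfolding E_Sn_sq using n by simp
  also have "expectation (\<lambda>\<omega>. (Wn n \<omega>)\<^sup>2) / real n \<le> CW / real n"
    unfolding CW_def using EW2(2)[OF n] n by (simp add: divide_right_mono)
  also have "real n ^ 3 * prob (space M - Gd \<epsilon> n) \<le> real n ^ 3 * Pb \<epsilon> n"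
    using prob_bad[OF e(1) n(1)] by (intro mult_left_mono) auto
  finally show ?thesis by simp
qed

lemma exp_lower:
  assumes e: "0 < \<epsilon>" "\<epsilon> \<le> mu m / 2" and n: "n > 0" "4 / real n \<le> a0"
  shows "sigma2 m / (mu m + \<epsilon>)\<^sup>2 - real n * Pb \<epsilon> n / (4 * (mu m + \<epsilon>)\<^sup>2) \<le> real n * expectation (\<lambda>\<omega>. (Tn n \<omega>)\<^sup>2)"
proof -
  have n2: "2 / real n \<le> a0" using n by (smt (verit) divide_right_mono of_nat_0_le_iff)
  have mu: "mu m > 0" using mu_pos[OF m_gt] .
  have "sigma2 m / (mu m + \<epsilon>)\<^sup>2 - real n * Pb \<epsilon> n / (4 * (mu m + \<epsilon>)\<^sup>2)
      \<le> expectation (\<lambda>\<omega>. (Sn n \<omega>)\<^sup>2) / (real n * (mu m + \<epsilon>)\<^sup>2) - real n / (4 * (mu m + \<epsilon>)\<^sup>2) * prob (space M - Gd \<epsilon> n)"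
  proof -
    have "expectation (\<lambda>\<omega>. (Sn n \<omega>)\<^sup>2) / (real n * (mu m + \<epsilon>)\<^sup>2) = sigma2 m / (mu m + \<epsilon>)\<^sup>2"
      unfolding E_Sn_sq using n by simp
    moreover have "real n / (4 * (mu m + \<epsilon>)\<^sup>2) * prob (space M - Gd \<epsilon> n) \<le> real n / (4 * (mu m + \<epsilon>)\<^sup>2) * Pb \<epsilon> n"
      using prob_bad[OF e(1) n(1)] by (intro mult_left_mono) auto
    ultimately show ?thesis by simp
  qed
  also have "\<dots> = expectation (\<lambda>\<omega>. (Sn n \<omega>)\<^sup>2 / (real n * (mu m + \<epsilon>)\<^sup>2) - real n / (4 * (mu m + \<epsilon>)\<^sup>2) * indicator (space M - Gd \<epsilon> n) \<omega>)"
    using Sn2_int ind_int prob_ind by simp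
  also have "\<dots> \<le> expectation (\<lambda>\<omega>. real n * (Tn n \<omega>)\<^sup>2)"
  proof (rule integral_mono_AE)
    show "integrable M (\<lambda>\<omega>. real n * (Tn n \<omega>)\<^sup>2)" using T2_int[OF n(1) n2] by simp
    show "integrable M (\<lambda>\<omega>. (Sn n \<omega>)\<^sup>2 / (real n * (mu m + \<epsilon>)\<^sup>2) - real n / (4 * (mu m + \<epsilon>)\<^sup>2) * indicator (space M - Gd \<epsilon> n) \<omega>)"
      using Sn2_int ind_int by simp
    show "AE \<omega> in M. (Sn n \<omega>)\<^sup>2 / (real n * (mu m + \<epsilon>)\<^sup>2) - real n / (4 * (mu m + \<epsilon>)\<^sup>2) * indicator (space M - Gd \<epsilon> n) \<omega>
       \<le> real n * (Tn n \<omega>)\<^sup>2"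
      using pointwise_L[OF e n(1)] by (intro AE_I2) auto
  qed
  also have "\<dots> = real n * expectation (\<lambda>\<omega>. (Tn n \<omega>)\<^sup>2)" by simp
  finally show ?thesis .
qed

end

context pvii
begin

lemma Pb_nonneg: "Pb \<epsilon> n \<ge> 0"
  unfolding Pb_def using rW_bounds by simp

lemma main_limit: "(\<lambda>n. real n * expectation (\<lambda>\<omega>. (Tn n \<omega>)\<^sup>2)) \<longlonglongrightarrow> sigma2 m / (mu m)\<^sup>2"
proof (rule tendstoI)
  fix e :: real assume e: "e > 0"
  let ?L = "sigma2 m / (mu m)\<^sup>2"
  have mu: "mu m > 0" using mu_pos[OF m_gt] .
  have f1: "((\<lambda>x. sigma2 m / (mu m - x)\<^sup>2) \<longlongrightarrow> ?L) (at_right 0)"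
    using mu by (intro tendsto_eq_intros) (auto intro!: tendsto_eq_intros simp: at_within_def)
  have f2: "((\<lambda>x. sigma2 m / (mu m + x)\<^sup>2) \<longlongrightarrow> ?L) (at_right 0)"
    using mu by (intro tendsto_eq_intros) (auto intro!: tendsto_eq_intros simp: at_within_def)
  have ev1: "\<forall>\<^sub>F x in at_right 0. sigma2 m / (mu m - x)\<^sup>2 < ?L + e / 2"
    using order_tendstoD(2)[OF f1, of "?L + e/2"] e by simp
  have ev2: "\<forall>\<^sub>F x in at_right 0. sigma2 m / (mu m + x)\<^sup>2 > ?L - e / 2"
    using order_tendstoD(1)[OF f2, of "?L - e/2"] e by simp
  have ev3: "\<forall>\<^sub>F x in at_right 0. x < mu m / 2"
    using order_tendstoD(2)[OF tendsto_ident_at[of "0::real" "{0<..}"], of "mu m / 2"] mu by simp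
  have "\<forall>\<^sub>F x in at_right (0::real). 0 < x \<and> x < mu m / 2 \<and> sigma2 m / (mu m - x)\<^sup>2 < ?L + e / 2
      \<and> sigma2 m / (mu m + x)\<^sup>2 > ?L - e / 2"
    using eventually_at_right_less ev1 ev2 ev3 by eventually_elim auto
  then obtain \<epsilon> where eps: "0 < \<epsilon>" "\<epsilon> < mu m / 2" "sigma2 m / (mu m - \<epsilon>)\<^sup>2 < ?L + e / 2"
      "sigma2 m / (mu m + \<epsilon>)\<^sup>2 > ?L - e / 2"
    using eventually_happens[of _ "at_right (0::real)"] by auto
  have P3: "(\<lambda>n. real n ^ 3 * Pb \<epsilon> n) \<longlonglongrightarrow> 0" using Pb_lim[OF eps(1)] .
  have P1: "(\<lambda>n. real n * Pb \<epsilon> n) \<longlonglongrightarrow> 0"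
  proof (rule Lim_null_comparison[OF _ P3])
    show "\<forall>\<^sub>F n in sequentially. norm (real n * Pb \<epsilon> n) \<le> real n ^ 3 * Pb \<epsilon> n"
    proof (rule eventually_sequentiallyI[of 1])
      fix n :: nat assume n: "n \<ge> 1"
      have "real n * 1 \<le> real n * (real n)\<^sup>2" using n by (intro mult_left_mono) auto
      then have "real n \<le> real n ^ 3" by (simp add: power2_eq_square power3_eq_cube)
      then show "norm (real n * Pb \<epsilon> n) \<le> real n ^ 3 * Pb \<epsilon> n"
        using Pb_nonneg[of \<epsilon> n] by (simp add: mult_right_mono)
    qed
  qed
  have CWl: "(\<lambda>n. CW / real n) \<longlonglongrightarrow> 0"
    by (intro tendsto_divide_0[OF tendsto_const] filterlim_at_top_imp_at_infinity filterlim_real_sequentially)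
  have A: "(\<lambda>n. CW / real n + real n ^ 3 * Pb \<epsilon> n) \<longlonglongrightarrow> 0 + 0" by (intro tendsto_add CWl P3)
  have B: "(\<lambda>n. real n * Pb \<epsilon> n / (4 * (mu m + \<epsilon>)\<^sup>2)) \<longlonglongrightarrow> 0 / (4 * (mu m + \<epsilon>)\<^sup>2)"
    by (intro tendsto_divide P1 tendsto_const) (use eps mu in simp)
  have evA: "\<forall>\<^sub>F n in sequentially. CW / real n + real n ^ 3 * Pb \<epsilon> n < e / 2"
    using order_tendstoD(2)[OF A, of "e/2"] e by simp
  have evB: "\<forall>\<^sub>F n in sequentially. real n * Pb \<epsilon> n / (4 * (mu m + \<epsilon>)\<^sup>2) < e / 2"
    using order_tendstoD(2)[OF B, of "e/2"] e by simp
  define N0 where "N0 = nat \<lceil>4 / a0\<rceil> + 1"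
  have evN: "\<forall>\<^sub>F n in sequentially. n > 0 \<and> 4 / real n \<le> a0"
  proof (rule eventually_sequentiallyI[of N0])
    fix n assume n: "N0 \<le> n"
    then have n0: "n > 0" unfolding N0_def by simp
    have "4 / a0 \<le> real n" using n unfolding N0_def by linarith
    then have "4 / real n \<le> a0" using n0 a0_pos by (simp add: divide_le_eq mult.commute)
    with n0 show "n > 0 \<and> 4 / real n \<le> a0" by simp
  qed
  show "\<forall>\<^sub>F n in sequentially. dist (real n * expectation (\<lambda>\<omega>. (Tn n \<omega>)\<^sup>2)) ?L < e"
    using evA evB evN
  proof eventually_elim
    case (elim n)
    have e': "0 < \<epsilon>" "\<epsilon> \<le> mu m / 2" using eps by auto
    have U: "real n * expectation (\<lambda>\<omega>. (Tn n \<omega>)\<^sup>2) \<le> sigma2 m / (mu m - \<epsilon>)\<^sup>2 + CW / real n + real n ^ 3 * Pb \<epsilon> n"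
      using exp_upper[OF e'] elim by auto
    have L: "sigma2 m / (mu m + \<epsilon>)\<^sup>2 - real n * Pb \<epsilon> n / (4 * (mu m + \<epsilon>)\<^sup>2) \<le> real n * expectation (\<lambda>\<omega>. (Tn n \<omega>)\<^sup>2)"
      using exp_lower[OF e'] elim by auto
    have h1: "real n * expectation (\<lambda>\<omega>. (Tn n \<omega>)\<^sup>2) - ?L < e" using U eps(3) elim(1) by linarith
    have h2: "- (real n * expectation (\<lambda>\<omega>. (Tn n \<omega>)\<^sup>2) - ?L) < e" using L eps(4) elim(2) by linarith
    show ?case unfolding dist_real_def by (rule abs_less_iff[THEN iffD2, OF conjI[OF h1 h2]])
  qed
qed

end

theorem theorem1p6:
  fixes m \<theta> :: real
    and M :: "'a measure"
    and X :: "nat \<Rightarrow> 'a \<Rightarrow> real"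
    and est :: "nat \<Rightarrow> (nat \<Rightarrow> real) \<Rightarrow> real"
  assumes m_gt: "m > 1/2"
    and prob: "prob_space M"
    and indep: "prob_space.indep_vars M (\<lambda>_. borel) X UNIV"
    and distr: "\<And>i. distributed M lborel (X i) (\<lambda>x. ennreal (pvii_density m (x - \<theta>)))"
    and est_meas: "\<And>n. est n \<in> borel_measurable (PiM {..<n} (\<lambda>_. lborel))"
    and est_mle: "\<And>n x t. (\<Prod>i<n. pvii_density m (x i - t))
                           \<le> (\<Prod>i<n. pvii_density m (x i - est n x))"
  shows "(\<exists>N. \<forall>n\<ge>N. integrable M (\<lambda>\<omega>. (est n (restrict (\<lambda>i. X i \<omega>) {..<n}) - \<theta>)\<^sup>2))
       \<and> (\<lambda>n. real n * prob_space.expectation M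
                 (\<lambda>\<omega>. (est n (restrict (\<lambda>i. X i \<omega>) {..<n}) - \<theta>)\<^sup>2))
           \<longlonglongrightarrow> (m + 1) / (m * (2 * m - 1))"
  proof -
  have "pvii M m \<theta> X est"
    unfolding pvii_def pvii_axioms_def using prob m_gt indep distr est_meas est_mle by auto
  then interpret P: pvii M m \<theta> X est .
  have eqT: "(\<lambda>\<omega>. (est n (restrict (\<lambda>i. X i \<omega>) {..<n}) - \<theta>)\<^sup>2) = (\<lambda>\<omega>. (P.Tn n \<omega>)\<^sup>2)" for n
    unfolding P.Tn_def ..
  have part1: "\<exists>N. \<forall>n\<ge>N. integrable M (\<lambda>\<omega>. (est n (restrict (\<lambda>i. X i \<omega>) {..<n}) - \<theta>)\<^sup>2)"
  proof (intro exI allI impI)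
    fix n assume n: "nat \<lceil>2 / P.a0\<rceil> + 1 \<le> n"
    then have n0: "n > 0" by simp
    have "2 / P.a0 \<le> real n" using n by linarith
    then have "2 / real n \<le> P.a0" using n0 P.a0_pos by (simp add: divide_le_eq mult.commute)
    then show "integrable M (\<lambda>\<omega>. (est n (restrict (\<lambda>i. X i \<omega>) {..<n}) - \<theta>)\<^sup>2)"
      unfolding eqT using P.T2_int[OF n0] by simp
  qed
  have part2: "(\<lambda>n. real n * prob_space.expectation M (\<lambda>\<omega>. (est n (restrict (\<lambda>i. X i \<omega>) {..<n}) - \<theta>)\<^sup>2))
      \<longlonglongrightarrow> (m + 1) / (m * (2 * m - 1))"
    unfolding eqT using P.main_limit ratio_eq[OF m_gt] by simp
  show ?thesis using part1 part2 by blast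
qed

end
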